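(* Let $\omega=U_\alpha\,\mathrm{d}x^\alpha\in\Omega^1_\lambda(J^\infty)\otimes\mathfrak{g}$ be the spectral one-form of a jet linear spectral problem $D_\alpha\Phi=U_\alpha\Phi$ which is associated only with the solutions of $\Delta(j^p_xu)=0$ satisfying an additional condition, the set of such solutions having infinite prolongation $\mathcal{E}_2^\infty\subset\mathcal{E}^\infty$. Let $\Phi\in C^\infty_\lambda(J^\infty)\otimes G$ satisfy $D_\alpha\Phi=U_\alpha\Phi$ at all points of $\mathcal{E}_2^\infty$ and all $\lambda\in\Lambda$, and let $X_R$ be a generalized symmetry of $\Delta(j^p_xu)=0$. Define $$\Upsilon^{FG'}:=\mathcal{L}_{\mathrm{pr}X_R}\omega+\Big(\big(\mathrm{pr}X_R(D_\alpha\Phi-U_\alpha\Phi)\big)\Phi^{-1}\Big)\mathrm{d}x^\alpha.$$ Then $F^{FG'}:=\Phi^{-1}(\mathrm{pr}X_R\,\Phi)\in C^\infty_\lambda(\mathcal{E}_2^\infty)\otimes\mathfrak{g}$ is an immersion formula for $\Upsilon^{FG'}$, i.e. $\mathbf{d}F^{FG'}=\mathrm{Ad}_{\Phi^{-1}}\Upsilon^{FG'}$ on $\mathcal{E}_2^\infty$.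
   Context: $G$ is a matrix Lie group with matrix Lie algebra $\mathfrak{g}$. $J^\infty$ is the infinite jet space of $M\times N\to M$ ($M$ with coordinates $x^1,\dots,x^m$, $N$ with coordinates $u^i$), coordinates $x^\alpha,u^i,u^i_J$, points $[u]$; $D_\alpha=\partial_{x^\alpha}+u^i_{J,\alpha}\partial/\partial u^i_J$. $\mathcal{E}^\infty\subset J^\infty$ is defined by $D_J\Delta^\mu=0$ for all multi-indices $J$, for a fixed locally solvable maximal-rank system $\Delta^\mu(j^p_xu)=0$; $\mathcal{E}_2^\infty$ is defined analogously for the system augmented by the additional condition, and the $D_\alpha$ are tangent to it. $\Lambda\subset\mathbb{C}$ is a one-dimensional submanifold with coordinate $\lambda$; $C^\infty_\lambda$ denotes smooth functions of $([u],\lambda)$ depending on finitely many jet coordinates. Spectral forms are $\vartheta_J([u],\lambda)\mathrm{d}x^J$, $\vartheta_J\in C^\infty_\lambda\otimes\mathfrak{g}$. $\mathbf{d}(\vartheta_J\mathrm{d}x^J):=(D_\alpha\vartheta_J)\mathrm{d}x^\alpha\wedge\mathrm{d}x^J$; $\mathrm{Ad}_{\Phi^{-1}}$ conjugates coefficients, $X\mapsto\Phi^{-1}X\Phi$. A generalized vector field $X_R=R^i([u])\partial_{u^i}$ has prolongation $\mathrm{pr}X_R=\sum_J(D_JR^i)\partial/\partial u^i_J$, and is a generalized symmetry of $\Delta=0$ iff $\mathrm{pr}X_R$ is tangent to $\mathcal{E}^\infty$. $\mathcal{L}_{\mathrm{pr}X_R}\omega:=(\mathrm{pr}X_R(U_\alpha))\mathrm{d}x^\alpha$;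 $\mathrm{pr}X_R$ acts on matrix-valued functions entrywise. *)

theory Defs
  imports "HOL-Analysis.Analysis" "HOL-Library.Multiset"
begin

text \<open>Coordinates of the infinite jet space: x^alpha (alpha in 'm) and u^i_J
  (i in 'n, J a symmetric multi-index, i.e. a multiset over 'm; u^i = u^i_{empty}).\<close>
datatype ('m, 'n) jcoord = Xc 'm | Uc 'n "'m multiset"

type_synonym ('m, 'n) jpt = "('m, 'n) jcoord \<Rightarrow> real"

definition pdv :: "'c \<Rightarrow> (('c \<Rightarrow> real) \<Rightarrow> 'a::real_normed_vector) \<Rightarrow> ('c \<Rightarrow> real) \<Rightarrow> 'a" where
  "pdv c f p = vector_derivative (\<lambda>t. f (p(c := t))) (at (p c))"

text \<open>Smooth functions on an open set U of a coordinate space 'c => real, depending on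
  finitely many coordinates: continuous, all partial derivatives exist and are again
  smooth (all iterated partial derivatives exist and are continuous).\<close>
coinductive smooth_fs :: "('c \<Rightarrow> real) set \<Rightarrow> (('c \<Rightarrow> real) \<Rightarrow> 'a::real_normed_vector) \<Rightarrow> bool"
  for U where
  "(\<exists>S. finite S \<and> (\<forall>p\<in>U. \<forall>q\<in>U. (\<forall>c\<in>S. p c = q c) \<longrightarrow> f p = f q))
   \<Longrightarrow> continuous_on U f
   \<Longrightarrow> (\<forall>c. \<forall>p\<in>U. (\<lambda>t. f (p(c := t))) differentiable (at (p c)))
   \<Longrightarrow> (\<forall>c. smooth_fs U (pdv c f))
   \<Longrightarrow> smooth_fs U f"

text \<open>Total derivative D_alpha = d/dx^alpha + u^i_{J,alpha} d/du^i_J (the sum is finite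
  for functions depending on finitely many coordinates).\<close>
definition totD :: "'m \<Rightarrow> (('m, 'n) jpt \<Rightarrow> 'a::real_normed_vector) \<Rightarrow> ('m, 'n) jpt \<Rightarrow> 'a" where
  "totD \<alpha> f p = pdv (Xc \<alpha>) f p +
     (\<Sum>(i, J) \<in> {(i, J). pdv (Uc i J) f p \<noteq> 0}. p (Uc i (add_mset \<alpha> J)) *\<^sub>R pdv (Uc i J) f p)"

definition totDJ :: "'m::linorder multiset \<Rightarrow> (('m, 'n) jpt \<Rightarrow> 'a::real_normed_vector) \<Rightarrow> ('m, 'n) jpt \<Rightarrow> 'a" where
  "totDJ J f = foldr totD (sorted_list_of_multiset J) f"

text \<open>Prolongation of the generalized (evolutionary) vector field X_R = R^i d/du^i:
  pr X_R = sum_J (D_J R^i) d/du^i_J, acting entrywise on vector/matrix valued functions.\<close>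
definition prX :: "('n \<Rightarrow> ('m::linorder, 'n) jpt \<Rightarrow> real) \<Rightarrow> (('m, 'n) jpt \<Rightarrow> 'a::real_normed_vector) \<Rightarrow> ('m, 'n) jpt \<Rightarrow> 'a" where
  "prX R f p = (\<Sum>(i, J) \<in> {(i, J). pdv (Uc i J) f p \<noteq> 0}. totDJ J (R i) p *\<^sub>R pdv (Uc i J) f p)"

definition jet_order_le :: "nat \<Rightarrow> (('m, 'n) jpt \<Rightarrow> 'a) \<Rightarrow> bool" where
  "jet_order_le p f \<longleftrightarrow> (\<forall>q q'. (\<forall>\<alpha>. q (Xc \<alpha>) = q' (Xc \<alpha>)) \<and>
      (\<forall>i J. size J \<le> p \<longrightarrow> q (Uc i J) = q' (Uc i J)) \<longrightarrow> f q = f q')"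

definition prolong :: "('mu \<Rightarrow> ('m::linorder, 'n) jpt \<Rightarrow> real) \<Rightarrow> ('m, 'n) jpt set" where
  "prolong \<Delta> = {q. \<forall>\<mu> J. totDJ J (\<Delta> \<mu>) q = 0}"

definition maximal_rank :: "('mu::finite \<Rightarrow> ('m, 'n) jpt \<Rightarrow> real) \<Rightarrow> bool" where
  "maximal_rank \<Delta> \<longleftrightarrow> (\<forall>q. (\<forall>\<mu>. \<Delta> \<mu> q = 0) \<longrightarrow>
     (\<forall>a :: 'mu \<Rightarrow> real. (\<forall>c. (\<Sum>\<mu>\<in>UNIV. a \<mu> * pdv c (\<Delta> \<mu>) q) = 0) \<longrightarrow> (\<forall>\<mu>. a \<mu> = 0)))"

definition pdJ :: "'m::linorder multiset \<Rightarrow> (('m \<Rightarrow> real) \<Rightarrow> real) \<Rightarrow> ('m \<Rightarrow> real) \<Rightarrow> real" where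
  "pdJ J g = foldr pdv (sorted_list_of_multiset J) g"

definition jet :: "(('m::linorder \<Rightarrow> real) \<Rightarrow> 'n \<Rightarrow> real) \<Rightarrow> ('m \<Rightarrow> real) \<Rightarrow> ('m, 'n) jpt" where
  "jet f x c = (case c of Xc \<alpha> \<Rightarrow> x \<alpha> | Uc i J \<Rightarrow> pdJ J (\<lambda>y. f y i) x)"

definition locally_solvable :: "nat \<Rightarrow> ('mu \<Rightarrow> ('m::{finite,linorder}, 'n) jpt \<Rightarrow> real) \<Rightarrow> bool" where
  "locally_solvable p \<Delta> \<longleftrightarrow> (\<forall>q. (\<forall>\<mu>. \<Delta> \<mu> q = 0) \<longrightarrow>
     (\<exists>V f. open V \<and> (\<lambda>\<alpha>. q (Xc \<alpha>)) \<in> V \<and> (\<forall>i. smooth_fs V (\<lambda>x. f x i)) \<and>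
        (\<forall>x\<in>V. \<forall>\<mu>. \<Delta> \<mu> (jet f x) = 0) \<and>
        (\<forall>i J. size J \<le> p \<longrightarrow> jet f (\<lambda>\<alpha>. q (Xc \<alpha>)) (Uc i J) = q (Uc i J))))"

definition tangent_to :: "('n \<Rightarrow> ('m::linorder, 'n) jpt \<Rightarrow> real) \<Rightarrow> ('m, 'n) jpt set \<Rightarrow> bool" where
  "tangent_to R E \<longleftrightarrow> (\<forall>f :: ('m, 'n) jpt \<Rightarrow> real. smooth_fs UNIV f \<and> (\<forall>q\<in>E. f q = 0)
       \<longrightarrow> (\<forall>q\<in>E. prX R f q = 0))"

definition gen_symmetry :: "('mu \<Rightarrow> ('m::linorder, 'n) jpt \<Rightarrow> real) \<Rightarrow> ('n \<Rightarrow> ('m, 'n) jpt \<Rightarrow> real) \<Rightarrow> bool" where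
  "gen_symmetry \<Delta> R \<longleftrightarrow> tangent_to R (prolong \<Delta>)"

definition matrix_lie_group :: "(complex^'k^'k) set \<Rightarrow> bool" where
  "matrix_lie_group G \<longleftrightarrow> G \<subseteq> {A. invertible A} \<and> mat 1 \<in> G \<and>
     (\<forall>A\<in>G. \<forall>B\<in>G. A ** B \<in> G) \<and> (\<forall>A\<in>G. matrix_inv A \<in> G) \<and>
     closedin (top_of_set {A. invertible A}) G"

definition lie_algebra :: "(complex^'k^'k) set \<Rightarrow> (complex^'k^'k) set" where
  "lie_algebra G = {X. \<exists>\<gamma> \<epsilon>. \<epsilon> > 0 \<and> (\<forall>t. \<bar>t\<bar> < \<epsilon> \<longrightarrow> \<gamma> t \<in> G) \<and> \<gamma> 0 = mat 1 \<and>
                         (\<gamma> has_vector_derivative X) (at 0)}"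

end

theory Submission
  imports Defs
begin

definition dep :: "'c set \<Rightarrow> (('c \<Rightarrow> real) \<Rightarrow> 'a) \<Rightarrow> bool" where
  "dep S f \<longleftrightarrow> (\<forall>p q. (\<forall>c\<in>S. p c = q c) \<longrightarrow> f p = f q)"

definition D1 :: "(('c \<Rightarrow> real) \<Rightarrow> 'a::real_normed_vector) \<Rightarrow> bool" where
  "D1 f \<longleftrightarrow> (\<forall>c p. (\<lambda>t. f (p(c := t))) differentiable (at (p c)))"

lemma D1_iff: "D1 f \<longleftrightarrow> (\<forall>c. \<forall>p\<in>UNIV. (\<lambda>t. f (p(c := t))) differentiable (at (p c)))"
  by (simp add: D1_def)

lemma dep_iff: "dep S f \<longleftrightarrow> (\<forall>p\<in>UNIV. \<forall>q\<in>UNIV. (\<forall>c\<in>S. p c = q c) \<longrightarrow> f p = f q)"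
  by (simp add: dep_def)

lemma D1_at:
  assumes "D1 f"
  shows "((\<lambda>t. f (p(c := t))) has_vector_derivative pdv c f (p(c := s))) (at s)"
proof -
  define p' where "p' = p(c := s)"
  have "(\<lambda>t. f (p'(c := t))) differentiable (at (p' c))"
    using assms unfolding D1_def by blast
  then have "(\<lambda>t. f (p(c := t))) differentiable (at s)" by (simp add: p'_def)
  then show ?thesis unfolding pdv_def by (simp add: vector_derivative_works)
qed

lemma D1_at':
  assumes "D1 f"
  shows "((\<lambda>t. f (p(c := t))) has_vector_derivative pdv c f p) (at (p c))"
  using D1_at[OF assms, of p c "p c"] by simp

lemma D1I:
  assumes "\<And>c p. \<exists>D. ((\<lambda>t. f (p(c := t))) has_vector_derivative D) (at (p c))"
  shows "D1 f"
  unfolding D1_def using assms by (meson differentiableI_vector)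

lemma pdvI:
  assumes "((\<lambda>t. f (p(c := t))) has_vector_derivative D) (at (p c))"
  shows "pdv c f p = D"
  unfolding pdv_def using assms by (rule vector_derivative_at)

lemma dep_mono: "dep S f \<Longrightarrow> S \<subseteq> T \<Longrightarrow> dep T f"
  unfolding dep_def by blast

lemma pdv_outside:
  assumes "dep S f" "c \<notin> S"
  shows "pdv c f p = 0"
proof -
  have "f (p(c := t)) = f p" for t
  proof -
    have "\<forall>c'\<in>S. (p(c := t)) c' = p c'" using assms(2) by auto
    then show ?thesis using assms(1) unfolding dep_def by blast
  qed
  then have "(\<lambda>t. f (p(c := t))) = (\<lambda>t. f p)" by auto
  then show ?thesis unfolding pdv_def by simp
qed

lemma dep_pdv:
  assumes "dep S f"
  shows "dep S (pdv c f)"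
  unfolding dep_def
proof (intro allI impI)
  fix p q :: "'a \<Rightarrow> real" assume pq: "\<forall>c\<in>S. p c = q c"
  show "pdv c f p = pdv c f q"
  proof (cases "c \<in> S")
    case True
    have "f (p(c := t)) = f (q(c := t))" for t
      using assms[unfolded dep_def, rule_format, of "p(c := t)" "q(c := t)"] pq by auto
    then have "(\<lambda>t. f (p(c := t))) = (\<lambda>t. f (q(c := t)))" by auto
    then show ?thesis unfolding pdv_def using True pq by simp
  next
    case False
    then show ?thesis using pdv_outside[OF assms] by simp
  qed
qed

lemma smooth_D1: "smooth_fs UNIV f \<Longrightarrow> D1 f"
  by (erule smooth_fs.cases) (simp add: D1_iff)

lemma smooth_cont: "smooth_fs UNIV f \<Longrightarrow> continuous_on UNIV f"
  by (erule smooth_fs.cases) simp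

lemma smooth_pdv: "smooth_fs UNIV f \<Longrightarrow> smooth_fs UNIV (pdv c f)"
  by (erule smooth_fs.cases) simp

lemma smooth_dep: "smooth_fs UNIV f \<Longrightarrow> \<exists>S. finite S \<and> dep S f"
  by (erule smooth_fs.cases) (simp only: dep_iff)

lemma smoothI:
  assumes "finite S" "dep S f" "continuous_on UNIV f" "D1 f" "\<And>c. smooth_fs UNIV (pdv c f)"
  shows "smooth_fs UNIV f"
  apply (rule smooth_fs.intros)
  using assms by (auto simp only: dep_iff D1_iff)

lemma pdv_bilinear:
  assumes B: "bounded_bilinear B" and f: "D1 f" and g: "D1 g"
  shows "pdv c (\<lambda>p. B (f p) (g p)) p = B (pdv c f p) (g p) + B (f p) (pdv c g p)"
proof (rule pdvI)
  show "((\<lambda>t. B (f (p(c := t))) (g (p(c := t)))) has_vector_derivative B (pdv c f p) (g p) + B (f p) (pdv c g p)) (at (p c))"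
    using bounded_bilinear.has_vector_derivative[OF B D1_at'[OF f, of p c] D1_at'[OF g, of p c]]
    by (simp add: add.commute)
qed

lemma D1_bilinear:
  assumes B: "bounded_bilinear B" and f: "D1 f" and g: "D1 g"
  shows "D1 (\<lambda>p. B (f p) (g p))"
proof (rule D1I)
  fix c p
  show "\<exists>D. ((\<lambda>t. B (f (p(c := t))) (g (p(c := t)))) has_vector_derivative D) (at (p c))"
    using bounded_bilinear.has_vector_derivative[OF B D1_at'[OF f, of p c] D1_at'[OF g, of p c]]
    by blast
qed

lemma pdv_add:
  assumes f: "D1 f" and g: "D1 g"
  shows "pdv c (\<lambda>p. f p + g p) p = pdv c f p + pdv c g p"
  by (rule pdvI) (intro has_vector_derivative_add D1_at'[OF f] D1_at'[OF g])

lemma D1_add: "D1 f \<Longrightarrow> D1 g \<Longrightarrow> D1 (\<lambda>p. f p + g p)"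
proof (rule D1I)
  fix c p assume f: "D1 f" and g: "D1 g"
  show "\<exists>D. ((\<lambda>t. f (p(c := t)) + g (p(c := t))) has_vector_derivative D) (at (p c))"
    using has_vector_derivative_add[OF D1_at'[OF f, of p c] D1_at'[OF g, of p c]] by blast
qed

lemma pdv_diff:
  assumes f: "D1 f" and g: "D1 g"
  shows "pdv c (\<lambda>p. f p - g p) p = pdv c f p - pdv c g p"
  by (rule pdvI) (intro has_vector_derivative_diff D1_at'[OF f] D1_at'[OF g])

lemma D1_diff: "D1 f \<Longrightarrow> D1 g \<Longrightarrow> D1 (\<lambda>p. f p - g p)"
proof (rule D1I)
  fix c p assume f: "D1 f" and g: "D1 g"
  show "\<exists>D. ((\<lambda>t. f (p(c := t)) - g (p(c := t))) has_vector_derivative D) (at (p c))"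
    using has_vector_derivative_diff[OF D1_at'[OF f, of p c] D1_at'[OF g, of p c]] by blast
qed

lemma pdv_const: "pdv c (\<lambda>p. k) p = 0"
  by (simp add: pdv_def)

lemma D1_const: "D1 (\<lambda>p. k)"
  by (rule D1I) (auto intro: has_vector_derivative_const)

lemma pdv_coord: "pdv c (\<lambda>p. p d) p = (if c = d then 1 else 0)"
  apply (rule pdvI)
  apply (cases "c = d")
   apply (auto intro!: derivative_eq_intros)
  done

lemma D1_coord: "D1 (\<lambda>p. p d)"
  apply (rule D1I)
  subgoal for c p
    by (cases "c = d") (auto intro!: derivative_eq_intros)
  done

lemma D1_sum:
  "finite I \<Longrightarrow> (\<And>i. i \<in> I \<Longrightarrow> D1 (f i)) \<Longrightarrow> D1 (\<lambda>p. \<Sum>i\<in>I. f i p)"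
proof (induction I rule: finite_induct)
  case empty then show ?case by (simp add: D1_const)
next
  case (insert x F) then show ?case by (simp add: D1_add)
qed

lemma pdv_sum:
  "finite I \<Longrightarrow> (\<And>i. i \<in> I \<Longrightarrow> D1 (f i)) \<Longrightarrow> pdv c (\<lambda>p. \<Sum>i\<in>I. f i p) p = (\<Sum>i\<in>I. pdv c (f i) p)"
proof (induction I rule: finite_induct)
  case empty then show ?case by (simp add: pdv_const)
next
  case (insert x F)
  then show ?case by (simp add: pdv_add D1_sum)
qed

lemma sc_cm: "((r *\<^sub>R B) :: complex^'k::finite^'k) $ k $ j = complex_of_real r * B $ k $ j"
  by (simp only: vector_scaleR_component) (simp add: scaleR_conv_of_real)

lemma matrix_add_rdistrib: "((B + C) ** A) = (B ** A) + (C ** A)"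
  by (vector matrix_matrix_mult_def sum.distrib[symmetric] field_simps)

lemma bb_mmult: "bounded_bilinear ((**) :: complex^'k::finite^'k \<Rightarrow> complex^'k^'k \<Rightarrow> complex^'k^'k)"
proof -
  have l1: "linear (\<lambda>B. A ** B)" for A :: "complex^'k^'k"
    by (rule linearI) (simp_all add: matrix_add_ldistrib, simp add: matrix_matrix_mult_def vec_eq_iff
         sc_cm sum_distrib_left scaleR_sum_right mult.left_commute)
  have l2: "linear (\<lambda>A. A ** B)" for B :: "complex^'k^'k"
    by (rule linearI) (simp_all add: matrix_add_rdistrib, simp add: matrix_matrix_mult_def vec_eq_iff
         sc_cm sum_distrib_left scaleR_sum_right mult.assoc)
  have "bilinear ((**) :: complex^'k::finite^'k \<Rightarrow> complex^'k^'k \<Rightarrow> complex^'k^'k)"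
    unfolding bilinear_def using l1 l2 by blast
  then show ?thesis using bilinear_conv_bounded_bilinear by blast
qed

lemma invertible_inv:
  assumes "invertible (A :: 'a::semiring_1^'n^'n)"
  shows "A ** matrix_inv A = mat 1" "matrix_inv A ** A = mat 1"
proof -
  have "\<exists>A'. A ** A' = mat 1 \<and> A' ** A = mat 1" using assms unfolding invertible_def by blast
  then have "A ** matrix_inv A = mat 1 \<and> matrix_inv A ** A = mat 1"
    unfolding matrix_inv_def by (rule someI_ex)
  then show "A ** matrix_inv A = mat 1" "matrix_inv A ** A = mat 1" by auto
qed

lemma smooth_const: fixes k :: "'a::real_normed_vector" shows "smooth_fs UNIV (\<lambda>p. k)"
proof -
  have "\<exists>k. h = (\<lambda>p. k) \<Longrightarrow> smooth_fs UNIV h" for h :: "('c \<Rightarrow> real) \<Rightarrow> 'a::real_normed_vector"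
  proof (coinduction arbitrary: h rule: smooth_fs.coinduct)
    case (smooth_fs h)
    then obtain k where h: "h = (\<lambda>p. k)" by blast
    have "pdv c h = (\<lambda>p. 0)" for c by (rule ext) (simp add: h pdv_const)
    then show ?case using h D1_const[unfolded D1_def] by auto
  qed
  then show ?thesis by blast
qed

lemma smooth_coord: "smooth_fs UNIV (\<lambda>p. p d)"
proof (rule smoothI[of "{d}"])
  show "dep {d} (\<lambda>p. p d)" by (simp add: dep_def)
  show "continuous_on UNIV (\<lambda>p. p d)" by (rule continuous_on_product_coordinates)
  show "D1 (\<lambda>p. p d)" by (rule D1_coord)
  have "pdv c (\<lambda>p. p d) = (\<lambda>p. if c = d then 1 else 0)" for c
    by (rule ext) (simp add: pdv_coord)
  then show "smooth_fs UNIV (pdv c (\<lambda>p. p d))" for c by (simp add: smooth_const)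
qed simp

fun bsum :: "('a \<Rightarrow> 'b \<Rightarrow> 'd::real_normed_vector) \<Rightarrow> ((('c \<Rightarrow> real) \<Rightarrow> 'a) \<times> (('c \<Rightarrow> real) \<Rightarrow> 'b)) list
   \<Rightarrow> ('c \<Rightarrow> real) \<Rightarrow> 'd" where
  "bsum B [] p = 0"
| "bsum B ((f, g) # xs) p = B (f p) (g p) + bsum B xs p"

lemma bsum_append: "bsum B (xs @ ys) p = bsum B xs p + bsum B ys p"
  by (induction xs) auto

lemma bsum_props:
  fixes B :: "'a::real_normed_vector \<Rightarrow> 'b::real_normed_vector \<Rightarrow> 'd::real_normed_vector"
    and xs :: "((('c \<Rightarrow> real) \<Rightarrow> 'a) \<times> (('c \<Rightarrow> real) \<Rightarrow> 'b)) list"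
  assumes B: "bounded_bilinear B"
    and sm: "\<forall>(f, g) \<in> set xs. smooth_fs UNIV f \<and> smooth_fs UNIV g"
  shows "(\<exists>S. finite S \<and> dep S (bsum B xs)) \<and> continuous_on UNIV (bsum B xs) \<and> D1 (bsum B xs)
     \<and> (\<forall>c. pdv c (bsum B xs) = bsum B (map (\<lambda>(f, g). (pdv c f, g)) xs @ map (\<lambda>(f, g). (f, pdv c g)) xs))"
  using sm
proof (induction xs)
  case Nil
  have e: "bsum B [] = (\<lambda>p. 0)" by (rule ext) simp
  have "dep {} (bsum B [])" unfolding e by (simp add: dep_def)
  moreover have "continuous_on UNIV (bsum B [])" unfolding e by simp
  moreover have "D1 (bsum B [])" unfolding e by (rule D1_const)
  moreover have "pdv c (bsum B []) = bsum B (map (\<lambda>(f, g). (pdv c f, g)) [] @ map (\<lambda>(f, g). (f, pdv c g)) [])" for c :: 'c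
    unfolding e by (rule ext) (simp add: pdv_const)
  ultimately show ?case using finite.emptyI by blast
next
  case (Cons x xs)
  obtain f g where x: "x = (f, g)" by fastforce
  have "(f, g) \<in> set (x # xs)" using x by simp
  then have "smooth_fs UNIV f \<and> smooth_fs UNIV g" using Cons.prems by blast
  then have f: "smooth_fs UNIV f" and g: "smooth_fs UNIV g" by auto
  have prem: "\<forall>(f, g)\<in>set xs. smooth_fs UNIV f \<and> smooth_fs UNIV g"
    using Cons.prems by (meson list.set_intros(2))
  have IH: "(\<exists>S. finite S \<and> dep S (bsum B xs)) \<and> continuous_on UNIV (bsum B xs) \<and> D1 (bsum B xs)
     \<and> (\<forall>c. pdv c (bsum B xs) = bsum B (map (\<lambda>(f, g). (pdv c f, g)) xs @ map (\<lambda>(f, g). (f, pdv c g)) xs))"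
    by (rule Cons.IH[OF prem])
  have e: "bsum B (x # xs) = (\<lambda>p. B (f p) (g p) + bsum B xs p)" by (rule ext) (simp add: x)
  obtain S1 where S1: "finite S1" "dep S1 f" using smooth_dep[OF f] by blast
  obtain S2 where S2: "finite S2" "dep S2 g" using smooth_dep[OF g] by blast
  obtain S3 where S3: "finite S3" "dep S3 (bsum B xs)" using IH by blast
  have dp: "dep (S1 \<union> S2 \<union> S3) (bsum B (x # xs))"
    unfolding dep_def
  proof (intro allI impI)
    fix p q :: "'c \<Rightarrow> real" assume pq: "\<forall>c\<in>S1 \<union> S2 \<union> S3. p c = q c"
    have "f p = f q" using S1(2)[unfolded dep_def, rule_format, of p q] pq by blast
    moreover have "g p = g q" using S2(2)[unfolded dep_def, rule_format, of p q] pq by blast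
    moreover have "bsum B xs p = bsum B xs q" using S3(2)[unfolded dep_def, rule_format, of p q] pq by blast
    ultimately show "bsum B (x # xs) p = bsum B (x # xs) q" by (simp add: e)
  qed
  have ct: "continuous_on UNIV (bsum B (x # xs))"
    unfolding e using IH smooth_cont[OF f] smooth_cont[OF g]
    by (intro continuous_on_add bounded_bilinear.continuous_on[OF B]) auto
  have D: "D1 (\<lambda>p. B (f p) (g p))"
    by (rule D1_bilinear[OF B smooth_D1[OF f] smooth_D1[OF g]])
  have d1: "D1 (bsum B (x # xs))"
    unfolding e using D IH by (intro D1_add) auto
  have pd: "pdv c (bsum B (x # xs)) = bsum B (map (\<lambda>(f, g). (pdv c f, g)) (x # xs) @ map (\<lambda>(f, g). (f, pdv c g)) (x # xs))" for c
  proof (rule ext)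
    fix p
    have "pdv c (bsum B (x # xs)) p = pdv c (\<lambda>p. B (f p) (g p)) p + pdv c (bsum B xs) p"
      unfolding e using D IH by (intro pdv_add) auto
    also have "\<dots> = B (pdv c f p) (g p) + B (f p) (pdv c g p) + pdv c (bsum B xs) p"
      by (simp add: pdv_bilinear[OF B smooth_D1[OF f] smooth_D1[OF g]])
    finally show "pdv c (bsum B (x # xs)) p = bsum B (map (\<lambda>(f, g). (pdv c f, g)) (x # xs) @ map (\<lambda>(f, g). (f, pdv c g)) (x # xs)) p"
      using IH by (simp add: x bsum_append algebra_simps)
  qed
  have fin: "finite (S1 \<union> S2 \<union> S3)" using S1 S2 S3 by simp
  show ?case
    apply (intro conjI allI)
       apply (rule exI[of _ "S1 \<union> S2 \<union> S3"])
    using fin dp ct d1 pd by auto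
qed

lemma smooth_coinduct:
  assumes "Q h"
    and step: "\<And>h. Q h \<Longrightarrow> (\<exists>S. finite S \<and> dep S h) \<and> continuous_on UNIV h \<and> D1 h \<and>
                 (\<forall>c. Q (pdv c h) \<or> smooth_fs UNIV (pdv c h))"
  shows "smooth_fs UNIV h"
  using assms(1)
proof (coinduction arbitrary: h rule: smooth_fs.coinduct)
  case (smooth_fs h)
  from step[OF this] obtain S where S: "finite S" "dep S h" and ct: "continuous_on UNIV h"
    and d1: "D1 h" and pd: "\<forall>c. Q (pdv c h) \<or> smooth_fs UNIV (pdv c h)" by blast
  have "\<exists>S. finite S \<and> (\<forall>p\<in>UNIV. \<forall>q\<in>UNIV. (\<forall>c\<in>S. p c = q c) \<longrightarrow> h p = h q)"
    using S unfolding dep_iff by blast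
  moreover have "\<forall>c. \<forall>p\<in>UNIV. (\<lambda>t. h (p(c := t))) differentiable at (p c)"
    using d1 unfolding D1_iff .
  moreover have "\<forall>c. (\<exists>h'. pdv c h = h' \<and> Q h') \<or> smooth_fs UNIV (pdv c h)"
    using pd by blast
  ultimately show ?case using ct by blast
qed

lemma smooth_bsum:
  fixes B :: "'a::real_normed_vector \<Rightarrow> 'b::real_normed_vector \<Rightarrow> 'd::real_normed_vector"
    and xs :: "((('c \<Rightarrow> real) \<Rightarrow> 'a) \<times> (('c \<Rightarrow> real) \<Rightarrow> 'b)) list"
  assumes B: "bounded_bilinear B"
    and sm: "\<forall>(f, g) \<in> set xs. smooth_fs UNIV f \<and> smooth_fs UNIV g"
  shows "smooth_fs UNIV (bsum B xs)"
proof (rule smooth_coinduct[where Q = "\<lambda>h. \<exists>xs. (\<forall>(f, g) \<in> set xs. smooth_fs UNIV f \<and> smooth_fs UNIV g) \<and> h = bsum B xs"])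
  show "\<exists>xs'. (\<forall>(f, g) \<in> set xs'. smooth_fs UNIV f \<and> smooth_fs UNIV g) \<and> bsum B xs = bsum B xs'"
    using sm by blast
next
  fix h assume "\<exists>xs. (\<forall>(f, g) \<in> set xs. smooth_fs UNIV f \<and> smooth_fs UNIV g) \<and> h = bsum B xs"
  then obtain xs where xs: "\<forall>(f, g) \<in> set xs. smooth_fs UNIV f \<and> smooth_fs UNIV g" and h: "h = bsum B xs"
    by blast
  note P = bsum_props[OF B xs]
  have "\<forall>(f, g) \<in> set (map (\<lambda>(f, g). (pdv c f, g)) xs @ map (\<lambda>(f, g). (f, pdv c g)) xs).
         smooth_fs UNIV f \<and> smooth_fs UNIV g" for c
    using xs by (auto simp: smooth_pdv)
  then have "\<forall>c. \<exists>xs. (\<forall>(f, g) \<in> set xs. smooth_fs UNIV f \<and> smooth_fs UNIV g) \<and> pdv c h = bsum B xs"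
    using P h by metis
  then show "(\<exists>S. finite S \<and> dep S h) \<and> continuous_on UNIV h \<and> D1 h \<and>
      (\<forall>c. (\<exists>xs. (\<forall>(f, g) \<in> set xs. smooth_fs UNIV f \<and> smooth_fs UNIV g) \<and> pdv c h = bsum B xs) \<or> smooth_fs UNIV (pdv c h))"
    using P h by blast
qed

lemma smooth_bilinear:
  assumes B: "bounded_bilinear B" and f: "smooth_fs UNIV f" and g: "smooth_fs UNIV g"
  shows "smooth_fs UNIV (\<lambda>p. B (f p) (g p))"
proof -
  have "bsum B [(f, g)] = (\<lambda>p. B (f p) (g p))" by (rule ext) simp
  then show ?thesis using smooth_bsum[OF B, of "[(f, g)]"] f g by simp
qed

lemma smooth_add:
  assumes f: "smooth_fs UNIV f" and g: "smooth_fs UNIV g"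
  shows "smooth_fs UNIV (\<lambda>p. f p + g p)"
proof -
  have "bsum scaleR [(\<lambda>p. 1, f), (\<lambda>p. 1, g)] = (\<lambda>p. f p + g p)" by (rule ext) simp
  then show ?thesis using smooth_bsum[OF bounded_bilinear_scaleR, of "[(\<lambda>p. 1, f), (\<lambda>p. 1, g)]"] f g
    by (simp add: smooth_const)
qed

lemma smooth_scaleR:
  assumes f: "smooth_fs UNIV r" and g: "smooth_fs UNIV g"
  shows "smooth_fs UNIV (\<lambda>p. r p *\<^sub>R g p)"
  by (rule smooth_bilinear[OF bounded_bilinear_scaleR f g])

lemma smooth_uminus:
  assumes g: "smooth_fs UNIV g"
  shows "smooth_fs UNIV (\<lambda>p. - g p)"
  using smooth_scaleR[OF smooth_const[of "-1"] g] by simp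

lemma smooth_diff:
  assumes f: "smooth_fs UNIV f" and g: "smooth_fs UNIV g"
  shows "smooth_fs UNIV (\<lambda>p. f p - g p)"
  using smooth_add[OF f smooth_uminus[OF g]] by simp

lemma smooth_sum:
  "finite I \<Longrightarrow> (\<And>i. i \<in> I \<Longrightarrow> smooth_fs UNIV (f i)) \<Longrightarrow> smooth_fs UNIV (\<lambda>p. \<Sum>i\<in>I. f i p)"
proof (induction I rule: finite_induct)
  case empty then show ?case by (simp add: smooth_const)
next
  case (insert x F) then show ?case by (simp add: smooth_add)
qed

lemma smooth_mmult:
  fixes f g :: "('c \<Rightarrow> real) \<Rightarrow> complex^'k::finite^'k"
  assumes f: "smooth_fs UNIV f" and g: "smooth_fs UNIV g"
  shows "smooth_fs UNIV (\<lambda>p. f p ** g p)"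
  by (rule smooth_bilinear[OF bb_mmult f g])

lemma hvd_quot:
  fixes f :: "real \<Rightarrow> 'a::real_normed_vector"
  shows "(f has_vector_derivative D) (at x) \<longleftrightarrow> ((\<lambda>t. (f t - f x) /\<^sub>R (t - x)) \<longlongrightarrow> D) (at x)"
proof -
  have eq: "norm ((1 / norm (y - x)) *\<^sub>R (f y - (f x + (y - x) *\<^sub>R D))) = norm ((f y - f x) /\<^sub>R (y - x) - D)"
    if "y \<noteq> x" for y
  proof -
    have "(1 / (y - x)) *\<^sub>R (f y - (f x + (y - x) *\<^sub>R D)) = (f y - f x) /\<^sub>R (y - x) - (1 / (y - x)) *\<^sub>R ((y - x) *\<^sub>R D)"
      by (simp add: algebra_simps inverse_eq_divide)
    also have "(1 / (y - x)) *\<^sub>R ((y - x) *\<^sub>R D) = D" using that by simp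
    finally have "(f y - f x) /\<^sub>R (y - x) - D = (1 / (y - x)) *\<^sub>R (f y - (f x + (y - x) *\<^sub>R D))" by simp
    then show ?thesis by simp
  qed
  have ev: "eventually (\<lambda>y. norm ((1 / norm (y - x)) *\<^sub>R (f y - (f x + (y - x) *\<^sub>R D))) = norm ((f y - f x) /\<^sub>R (y - x) - D)) (at x)"
    unfolding eventually_at_filter using eq by (intro always_eventually) auto
  have "(f has_vector_derivative D) (at x) \<longleftrightarrow>
        ((\<lambda>y. (1 / norm (y - x)) *\<^sub>R (f y - (f x + (y - x) *\<^sub>R D))) \<longlongrightarrow> 0) (at x)"
    unfolding has_vector_derivative_def has_derivative_at2 by (simp add: bounded_linear_scaleR_left)
  also have "\<dots> \<longleftrightarrow> ((\<lambda>y. norm ((1 / norm (y - x)) *\<^sub>R (f y - (f x + (y - x) *\<^sub>R D)))) \<longlongrightarrow> 0) (at x)"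
    by (rule tendsto_norm_zero_iff[symmetric])
  also have "\<dots> \<longleftrightarrow> ((\<lambda>y. norm ((f y - f x) /\<^sub>R (y - x) - D)) \<longlongrightarrow> 0) (at x)"
    by (rule tendsto_cong[OF ev])
  also have "\<dots> \<longleftrightarrow> ((\<lambda>y. (f y - f x) /\<^sub>R (y - x) - D) \<longlongrightarrow> 0) (at x)"
    by (rule tendsto_norm_zero_iff)
  also have "\<dots> \<longleftrightarrow> ((\<lambda>t. (f t - f x) /\<^sub>R (t - x)) \<longlongrightarrow> D) (at x)"
    by (rule LIM_zero_iff)
  finally show ?thesis .
qed

lemma mm_diff_right:
  fixes A B C :: "complex^'k::finite^'k"
  shows "(A) ** (B - C) = A ** B - A ** C"
  by (rule bounded_bilinear.diff_right[OF bb_mmult])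

lemma mm_diff_left:
  fixes A B C :: "complex^'k::finite^'k"
  shows "((B) - C) ** A = B ** A - C ** A"
  by (rule bounded_bilinear.diff_left[OF bb_mmult])

lemma mm_scaleR_right:
  fixes A B C :: "complex^'k::finite^'k"
  shows "(A) ** (r *\<^sub>R B) = r *\<^sub>R (A ** B)"
  by (rule bounded_bilinear.scaleR_right[OF bb_mmult])

lemma mm_scaleR_left:
  fixes A B C :: "complex^'k::finite^'k"
  shows "(r *\<^sub>R (A)) ** B = r *\<^sub>R (A ** B)"
  by (rule bounded_bilinear.scaleR_left[OF bb_mmult])

lemma mm_minus_left:
  fixes A B C :: "complex^'k::finite^'k"
  shows "(- (A)) ** B = - (A ** B)"
  by (rule bounded_bilinear.minus_left[OF bb_mmult])

lemma mm_minus_right: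
  fixes A B C :: "complex^'k::finite^'k"
  shows "(A) ** (- B) = - (A ** B)"
  by (rule bounded_bilinear.minus_right[OF bb_mmult])

lemma hvd_inv:
  fixes \<phi> :: "real \<Rightarrow> complex^'k::finite^'k"
  assumes D: "(\<phi> has_vector_derivative D) (at x)"
    and inv: "\<And>t. invertible (\<phi> t)"
    and ct: "continuous (at x) (\<lambda>t. matrix_inv (\<phi> t))"
  shows "((\<lambda>t. matrix_inv (\<phi> t)) has_vector_derivative - (matrix_inv (\<phi> x) ** D ** matrix_inv (\<phi> x))) (at x)"
proof -
  let ?\<psi> = "\<lambda>t. matrix_inv (\<phi> t)"
  have id: "?\<psi> t - ?\<psi> x = - (?\<psi> t ** (\<phi> t - \<phi> x) ** ?\<psi> x)" for t
  proof -
    have "?\<psi> t ** (\<phi> t - \<phi> x) ** ?\<psi> x = ?\<psi> t ** \<phi> t ** ?\<psi> x - ?\<psi> t ** \<phi> x ** ?\<psi> x"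
      by (simp add: mm_diff_right mm_diff_left)
    also have "\<dots> = ?\<psi> x - ?\<psi> t"
      using invertible_inv[OF inv[of t]] invertible_inv[OF inv[of x]]
      by (simp add: matrix_mul_assoc[symmetric])
    finally show ?thesis by simp
  qed
  have q: "(?\<psi> t - ?\<psi> x) /\<^sub>R (t - x) = - (?\<psi> t ** ((\<phi> t - \<phi> x) /\<^sub>R (t - x)) ** ?\<psi> x)" for t
    unfolding id by (simp add: mm_scaleR_right mm_scaleR_left)
  have lim1: "(?\<psi> \<longlongrightarrow> ?\<psi> x) (at x)" using ct by (simp add: continuous_at)
  have lim2: "((\<lambda>t. (\<phi> t - \<phi> x) /\<^sub>R (t - x)) \<longlongrightarrow> D) (at x)" using D hvd_quot by blast
  have "((\<lambda>t. - (?\<psi> t ** ((\<phi> t - \<phi> x) /\<^sub>R (t - x)) ** ?\<psi> x)) \<longlongrightarrow> - (?\<psi> x ** D ** ?\<psi> x)) (at x)"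
    by (intro tendsto_minus bounded_bilinear.tendsto[OF bb_mmult] lim1 lim2 tendsto_const)
  then show ?thesis unfolding hvd_quot q .
qed

lemma inv_entry:
  fixes M :: "complex^'k::finite^'k"
  assumes "invertible M"
  shows "matrix_inv M $ k $ j = det (\<chi> i l. if l = k then (if i = j then 1 else 0) else M $ i $ l) / det M"
proof -
  let ?x = "\<chi> k. matrix_inv M $ k $ j"
  let ?b = "\<chi> i. if i = j then 1 else (0::complex)"
  have "M *v ?x = ?b"
    using invertible_inv(1)[OF assms]
    by (simp add: vec_eq_iff matrix_vector_mult_def matrix_matrix_mult_def mat_def)
  moreover have "det M \<noteq> 0" using assms invertible_det_nz by blast
  ultimately have "?x = (\<chi> k. det (\<chi> i l. if l = k then ?b $ i else M $ i $ l) / det M)"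
    using cramer by blast
  then have "?x $ k = det (\<chi> i l. if l = k then ?b $ i else M $ i $ l) / det M" by simp
  moreover have "(\<chi> i l. if l = k then ?b $ i else M $ i $ l) = (\<chi> i l. if l = k then (if i = j then 1 else 0) else M $ i $ l)"
    by (simp add: vec_eq_iff)
  ultimately show ?thesis by simp
qed

lemma continuous_on_det:
  fixes F :: "'a::topological_space \<Rightarrow> complex^'k::finite^'k"
  assumes "continuous_on S F"
  shows "continuous_on S (\<lambda>x. det (F x))"
  unfolding det_def using assms
  by (intro continuous_intros)

lemma continuous_on_if_const:
  "continuous_on S g \<Longrightarrow> continuous_on S (\<lambda>x. if P then a else g x)"
  by (cases P) auto

lemma continuous_on_inv:
  fixes F :: "'a::topological_space \<Rightarrow> complex^'k::finite^'k"
  assumes ct: "continuous_on S F" and inv: "\<And>x. invertible (F x)"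
  shows "continuous_on S (\<lambda>x. matrix_inv (F x))"
proof -
  have e: "matrix_inv (F x) = (\<chi> k j. det (\<chi> i l. if l = k then (if i = j then 1 else 0) else F x $ i $ l) / det (F x))" for x
    using inv_entry[OF inv[of x]] by (simp add: vec_eq_iff)
  have nz: "det (F x) \<noteq> 0" for x using inv[of x] invertible_det_nz by blast
  show ?thesis unfolding e
    apply (intro continuous_on_vec_lambda continuous_on_divide continuous_on_det)
    using ct nz by (auto intro!: continuous_intros continuous_on_if_const)
qed

lemma continuous_on_upd: "continuous_on UNIV (\<lambda>t. p(c := t))"
proof (rule continuous_on_coordinatewise_then_product)
  fix i
  show "continuous_on UNIV (\<lambda>t. (p(c := t)) i)"
    by (cases "i = c") (simp_all add: continuous_on_id)
qed

lemma dep_bin: "dep S f \<Longrightarrow> dep T g \<Longrightarrow> dep (S \<union> T) (\<lambda>p. F (f p) (g p))"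
  unfolding dep_def by (metis UnCI)

lemma dep_un: "dep S f \<Longrightarrow> dep S (\<lambda>p. F (f p))"
  unfolding dep_def by metis

lemma pdv_minus:
  assumes f: "D1 f"
  shows "pdv c (\<lambda>p. - f p) p = - pdv c f p"
  by (rule pdvI) (intro has_vector_derivative_minus D1_at'[OF f])

lemma D1_minus: "D1 f \<Longrightarrow> D1 (\<lambda>p. - f p)"
proof (rule D1I)
  fix c p assume f: "D1 f"
  show "\<exists>D. ((\<lambda>t. - f (p(c := t))) has_vector_derivative D) (at (p c))"
    using has_vector_derivative_minus[OF D1_at'[OF f, of p c]] by blast
qed

lemma inv_hvd:
  fixes \<Phi> :: "('c \<Rightarrow> real) \<Rightarrow> complex^'k::finite^'k"
  assumes d: "D1 \<Phi>" and ct: "continuous_on UNIV \<Phi>" and inv: "\<And>p. invertible (\<Phi> p)"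
  shows "((\<lambda>t. matrix_inv (\<Phi> (p(c := t)))) has_vector_derivative
           - (matrix_inv (\<Phi> p) ** pdv c \<Phi> p ** matrix_inv (\<Phi> p))) (at (p c))"
proof -
  have c1: "continuous_on UNIV (\<lambda>q. matrix_inv (\<Phi> q))" by (rule continuous_on_inv[OF ct inv])
  have "continuous_on UNIV (\<lambda>t. matrix_inv (\<Phi> (p(c := t))))"
    using continuous_on_compose[OF continuous_on_upd[of p c], of "\<lambda>q. matrix_inv (\<Phi> q)"]
      continuous_on_subset[OF c1, of "range (fun_upd p c)"]
    by (simp add: o_def)
  then have c2: "continuous (at (p c)) (\<lambda>t. matrix_inv (\<Phi> (p(c := t))))"
    by (simp add: continuous_on_eq_continuous_at)
  show ?thesis
    using hvd_inv[OF D1_at'[OF d, of p c] inv c2] by simp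
qed

lemma D1_inv:
  fixes \<Phi> :: "('c \<Rightarrow> real) \<Rightarrow> complex^'k::finite^'k"
  assumes d: "D1 \<Phi>" and ct: "continuous_on UNIV \<Phi>" and inv: "\<And>p. invertible (\<Phi> p)"
  shows "D1 (\<lambda>p. matrix_inv (\<Phi> p))"
  using inv_hvd[OF assms] by (intro D1I) blast

lemma pdv_inv:
  fixes \<Phi> :: "('c \<Rightarrow> real) \<Rightarrow> complex^'k::finite^'k"
  assumes d: "D1 \<Phi>" and ct: "continuous_on UNIV \<Phi>" and inv: "\<And>p. invertible (\<Phi> p)"
  shows "pdv c (\<lambda>p. matrix_inv (\<Phi> p)) p = - (matrix_inv (\<Phi> p) ** pdv c \<Phi> p ** matrix_inv (\<Phi> p))"
  by (rule pdvI[OF inv_hvd[OF assms]])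

inductive ialg :: "(('c \<Rightarrow> real) \<Rightarrow> complex^'k::finite^'k) \<Rightarrow> (('c \<Rightarrow> real) \<Rightarrow> complex^'k^'k) \<Rightarrow> bool"
  for \<Phi> where
  base: "smooth_fs UNIV f \<Longrightarrow> ialg \<Phi> f"
| inv: "ialg \<Phi> (\<lambda>p. matrix_inv (\<Phi> p))"
| add: "ialg \<Phi> f \<Longrightarrow> ialg \<Phi> g \<Longrightarrow> ialg \<Phi> (\<lambda>p. f p + g p)"
| mul: "ialg \<Phi> f \<Longrightarrow> ialg \<Phi> g \<Longrightarrow> ialg \<Phi> (\<lambda>p. f p ** g p)"
| neg: "ialg \<Phi> f \<Longrightarrow> ialg \<Phi> (\<lambda>p. - f p)"

lemma ialg_props:
  fixes \<Phi> :: "('c \<Rightarrow> real) \<Rightarrow> complex^'k::finite^'k"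
  assumes sm: "smooth_fs UNIV \<Phi>" and inv: "\<And>p. invertible (\<Phi> p)"
    and h: "ialg \<Phi> h"
  shows "(\<exists>S. finite S \<and> dep S h) \<and> continuous_on UNIV h \<and> D1 h \<and> (\<forall>c. ialg \<Phi> (pdv c h))"
  using h
proof (induction rule: ialg.induct)
  case (base f)
  then show ?case using smooth_dep[OF base] smooth_cont[OF base] smooth_D1[OF base]
    by (auto intro: ialg.base smooth_pdv)
next
  case inv
  obtain S where S: "finite S" "dep S \<Phi>" using smooth_dep[OF sm] by blast
  have "dep S (\<lambda>p. matrix_inv (\<Phi> p))" using dep_un[OF S(2)] .
  moreover have "continuous_on UNIV (\<lambda>p. matrix_inv (\<Phi> p))"
    by (rule continuous_on_inv[OF smooth_cont[OF sm] assms(2)])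
  moreover have "D1 (\<lambda>p. matrix_inv (\<Phi> p))"
    by (rule D1_inv[OF smooth_D1[OF sm] smooth_cont[OF sm] assms(2)])
  moreover have "ialg \<Phi> (pdv c (\<lambda>p. matrix_inv (\<Phi> p)))" for c
  proof -
    have "pdv c (\<lambda>p. matrix_inv (\<Phi> p)) = (\<lambda>p. - (matrix_inv (\<Phi> p) ** pdv c \<Phi> p ** matrix_inv (\<Phi> p)))"
      by (rule ext) (rule pdv_inv[OF smooth_D1[OF sm] smooth_cont[OF sm] assms(2)])
    moreover have "ialg \<Phi> (\<lambda>p. - (matrix_inv (\<Phi> p) ** pdv c \<Phi> p ** matrix_inv (\<Phi> p)))"
      by (intro ialg.neg ialg.mul ialg.inv ialg.base smooth_pdv sm)
    ultimately show ?thesis by simp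
  qed
  ultimately show ?case using S(1) by blast
next
  case (add f g)
  then obtain S T where "finite S" "dep S f" "finite T" "dep T g" by blast
  then have "finite (S \<union> T)" "dep (S \<union> T) (\<lambda>p. f p + g p)" using dep_bin by auto
  moreover have "continuous_on UNIV (\<lambda>p. f p + g p)" using add by (intro continuous_on_add) auto
  moreover have "D1 (\<lambda>p. f p + g p)" using add by (intro D1_add) auto
  moreover have "ialg \<Phi> (pdv c (\<lambda>p. f p + g p))" for c
  proof -
    have "pdv c (\<lambda>p. f p + g p) = (\<lambda>p. pdv c f p + pdv c g p)"
      using add by (intro ext pdv_add) auto
    then show ?thesis using add by (auto intro: ialg.add)
  qed
  ultimately show ?case by blast
next
  case (mul f g)
  then obtain S T where "finite S" "dep S f" "finite T" "dep T g" by blast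
  then have "finite (S \<union> T)" "dep (S \<union> T) (\<lambda>p. f p ** g p)" using dep_bin by auto
  moreover have "continuous_on UNIV (\<lambda>p. f p ** g p)"
    using mul by (intro bounded_bilinear.continuous_on[OF bb_mmult]) auto
  moreover have "D1 (\<lambda>p. f p ** g p)" using mul by (intro D1_bilinear[OF bb_mmult]) auto
  moreover have "ialg \<Phi> (pdv c (\<lambda>p. f p ** g p))" for c
  proof -
    have "pdv c (\<lambda>p. f p ** g p) = (\<lambda>p. pdv c f p ** g p + f p ** pdv c g p)"
      using mul by (intro ext pdv_bilinear[OF bb_mmult]) auto
    moreover have a: "ialg \<Phi> (pdv c f)" and b: "ialg \<Phi> (pdv c g)" using mul by blast+
    ultimately show ?thesis by (simp only:) (intro ialg.add ialg.mul a b mul.hyps)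
  qed
  ultimately show ?case by blast
next
  case (neg f)
  then obtain S where "finite S" "dep S f" by blast
  then have "finite S" "dep S (\<lambda>p. - f p)" using dep_un by auto
  moreover have "continuous_on UNIV (\<lambda>p. - f p)" using neg by (intro continuous_on_minus) auto
  moreover have "D1 (\<lambda>p. - f p)" using neg by (intro D1_minus) auto
  moreover have "ialg \<Phi> (pdv c (\<lambda>p. - f p))" for c
  proof -
    have "pdv c (\<lambda>p. - f p) = (\<lambda>p. - pdv c f p)"
      using neg by (intro ext pdv_minus) auto
    then show ?thesis using neg by (auto intro: ialg.neg)
  qed
  ultimately show ?case by blast
qed

lemma smooth_inv:
  fixes \<Phi> :: "('c \<Rightarrow> real) \<Rightarrow> complex^'k::finite^'k"
  assumes sm: "smooth_fs UNIV \<Phi>" and inv: "\<And>p. invertible (\<Phi> p)"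
  shows "smooth_fs UNIV (\<lambda>p. matrix_inv (\<Phi> p))"
proof (rule smooth_coinduct[where Q = "ialg \<Phi>"])
  show "ialg \<Phi> (\<lambda>p. matrix_inv (\<Phi> p))" by (rule ialg.inv)
next
  fix h assume "ialg \<Phi> h"
  then show "(\<exists>S. finite S \<and> dep S h) \<and> continuous_on UNIV h \<and> D1 h \<and> (\<forall>c. ialg \<Phi> (pdv c h) \<or> smooth_fs UNIV (pdv c h))"
    using ialg_props[OF sm inv] by blast
qed

lemma seg_bound:
  fixes a x k :: real
  assumes "x \<in> closed_segment a (a + k)"
  shows "\<bar>x - a\<bar> \<le> \<bar>k\<bar>"
  using assms by (auto simp: closed_segment_eq_real_ivl split: if_splits)

lemma cont_Q:
  "continuous_on UNIV (\<lambda>z::real \<times> real. (p(d := snd z))(c := fst z))"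
proof (rule continuous_on_coordinatewise_then_product)
  fix i
  show "continuous_on UNIV (\<lambda>z::real \<times> real. ((p(d := snd z))(c := fst z)) i)"
    by (cases "i = c"; cases "i = d") (auto intro!: continuous_intros)
qed

lemma clairaut_half:
  fixes f :: "('c \<Rightarrow> real) \<Rightarrow> 'a::real_normed_vector"
  assumes sm: "smooth_fs UNIV f" and cd: "c \<noteq> d" and eps: "\<epsilon> > 0"
  shows "\<exists>\<delta>>0. \<forall>h k. \<bar>h\<bar> < \<delta> \<longrightarrow> \<bar>k\<bar> < \<delta> \<longrightarrow>
     norm (f ((p(d := p d + k))(c := p c + h)) - f ((p(d := p d))(c := p c + h))
         - f ((p(d := p d + k))(c := p c)) + f ((p(d := p d))(c := p c))
         - (h * k) *\<^sub>R pdv d (pdv c f) p) \<le> \<epsilon> * \<bar>h\<bar> * \<bar>k\<bar>"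
proof -
  define Q where "Q \<sigma> \<tau> = (p(d := \<tau>))(c := \<sigma>)" for \<sigma> \<tau>
  define G where "G \<sigma> \<tau> = pdv d (pdv c f) (Q \<sigma> \<tau>)" for \<sigma> \<tau>
  define s0 where "s0 = p c"
  define t0 where "t0 = p d"
  define e where "e = \<epsilon> / 9"
  have e0: "e > 0" using eps by (simp add: e_def)
  have Q0: "Q s0 t0 = p" by (simp add: Q_def s0_def t0_def)
  have fc_d: "((\<lambda>\<sigma>'. f (Q \<sigma>' \<tau>)) has_vector_derivative pdv c f (Q \<sigma> \<tau>)) (at \<sigma>)" for \<sigma> \<tau>
    using D1_at[OF smooth_D1[OF sm], of "p(d := \<tau>)" c \<sigma>] by (simp add: Q_def)
  have Qt: "Q \<sigma> \<tau> = (p(c := \<sigma>))(d := \<tau>)" for \<sigma> \<tau>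
    using cd by (simp add: Q_def fun_upd_twist)
  have fdc_d: "((\<lambda>\<tau>'. pdv c f (Q \<sigma> \<tau>')) has_vector_derivative G \<sigma> \<tau>) (at \<tau>)" for \<sigma> \<tau>
    using D1_at[OF smooth_D1[OF smooth_pdv[OF sm, of c]], of "p(c := \<sigma>)" d \<tau>] by (simp add: Qt G_def)
  have "continuous_on UNIV (\<lambda>z::real \<times> real. G (fst z) (snd z))"
    unfolding G_def Q_def
    using continuous_on_compose[OF cont_Q[of p d c], of "pdv d (pdv c f)"]
      continuous_on_subset[OF smooth_cont[OF smooth_pdv[OF smooth_pdv[OF sm]]]]
    by (simp add: o_def)
  then have "continuous (at (s0, t0)) (\<lambda>z::real \<times> real. G (fst z) (snd z))"
    by (simp add: continuous_on_eq_continuous_at)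
  then obtain \<delta>' where d': "\<delta>' > 0" and
    dd: "\<And>z. dist z (s0, t0) < \<delta>' \<Longrightarrow> dist (G (fst z) (snd z)) (G s0 t0) < e"
    unfolding continuous_at_eps_delta using e0 by fastforce
  define \<delta> where "\<delta> = \<delta>' / 2"
  have d0: "\<delta> > 0" using d' by (simp add: \<delta>_def)
  have Gb: "norm (G \<sigma> \<tau> - G s0 t0) \<le> e" if "\<bar>\<sigma> - s0\<bar> < \<delta>" "\<bar>\<tau> - t0\<bar> < \<delta>" for \<sigma> \<tau>
  proof -
    have "dist (\<sigma>, \<tau>) (s0, t0) \<le> \<bar>\<sigma> - s0\<bar> + \<bar>\<tau> - t0\<bar>"
      using sqrt_sum_squares_le_sum_abs[of "\<sigma> - s0" "\<tau> - t0"]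
      by (simp add: dist_Pair_Pair dist_real_def)
    also have "\<dots> < \<delta>'" using that by (simp add: \<delta>_def)
    finally have "dist (G \<sigma> \<tau>) (G s0 t0) < e" using dd[of "(\<sigma>, \<tau>)"] by simp
    then show ?thesis by (simp add: dist_norm)
  qed
  have inner: "norm (pdv c f (Q \<sigma> (t0 + k)) - pdv c f (Q \<sigma> t0) - k *\<^sub>R G s0 t0) \<le> \<bar>k\<bar> * (3 * e)"
    if s: "\<bar>\<sigma> - s0\<bar> < \<delta>" and k: "\<bar>k\<bar> < \<delta>" for \<sigma> k
  proof -
    have B: "norm (G \<sigma> x - G \<sigma> t0) \<le> 2 * e" if "x \<in> closed_segment t0 (t0 + k)" for x
    proof -
      have "\<bar>x - t0\<bar> < \<delta>" using seg_bound[OF that] k by simp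
      then have "norm (G \<sigma> x - G s0 t0) \<le> e" using Gb s by simp
      moreover have "norm (G s0 t0 - G \<sigma> t0) \<le> e" using Gb[of \<sigma> t0] s d0 by (simp add: norm_minus_commute)
      ultimately show ?thesis using norm_diff_triangle_le by fastforce
    qed
    have "norm (pdv c f (Q \<sigma> (t0 + k)) - pdv c f (Q \<sigma> t0) - ((t0 + k) - t0) *\<^sub>R G \<sigma> t0) \<le> norm ((t0 + k) - t0) * (2 * e)"
      apply (rule vector_differentiable_bound_linearization[of "closed_segment t0 (t0 + k)"
            "\<lambda>\<tau>. pdv c f (Q \<sigma> \<tau>)" "G \<sigma>" t0 "t0 + k" t0 "2 * e"])
      using has_vector_derivative_at_within[OF fdc_d] B by auto
    then have i1: "norm (pdv c f (Q \<sigma> (t0 + k)) - pdv c f (Q \<sigma> t0) - k *\<^sub>R G \<sigma> t0) \<le> \<bar>k\<bar> * (2 * e)"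
      by simp
    have "norm (k *\<^sub>R G \<sigma> t0 - k *\<^sub>R G s0 t0) = \<bar>k\<bar> * norm (G \<sigma> t0 - G s0 t0)"
      by (simp add: scaleR_diff_right[symmetric])
    also have "\<dots> \<le> \<bar>k\<bar> * e" using Gb[of \<sigma> t0] s d0 by (simp add: mult_left_mono)
    finally have i2: "norm (k *\<^sub>R G \<sigma> t0 - k *\<^sub>R G s0 t0) \<le> \<bar>k\<bar> * e" .
    have "norm ((pdv c f (Q \<sigma> (t0 + k)) - pdv c f (Q \<sigma> t0)) - k *\<^sub>R G s0 t0) \<le> \<bar>k\<bar> * (2 * e) + \<bar>k\<bar> * e"
      by (rule norm_diff_triangle_le[OF i1 i2])
    then show ?thesis by (simp add: algebra_simps)
  qed
  have main: "norm (f (Q (s0 + h) (t0 + k)) - f (Q (s0 + h) t0) - f (Q s0 (t0 + k)) + f (Q s0 t0)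
          - (h * k) *\<^sub>R G s0 t0) \<le> \<epsilon> * \<bar>h\<bar> * \<bar>k\<bar>"
    if h: "\<bar>h\<bar> < \<delta>" and k: "\<bar>k\<bar> < \<delta>" for h k
  proof -
    define \<psi> where "\<psi> \<sigma> = f (Q \<sigma> (t0 + k)) - f (Q \<sigma> t0)" for \<sigma>
    define \<psi>' where "\<psi>' \<sigma> = pdv c f (Q \<sigma> (t0 + k)) - pdv c f (Q \<sigma> t0)" for \<sigma>
    have dpsi: "(\<psi> has_vector_derivative \<psi>' \<sigma>) (at \<sigma>)" for \<sigma>
      unfolding \<psi>_def \<psi>'_def by (intro has_vector_derivative_diff fc_d)
    have inner': "norm (\<psi>' \<sigma> - k *\<^sub>R G s0 t0) \<le> \<bar>k\<bar> * (3 * e)" if "\<bar>\<sigma> - s0\<bar> < \<delta>" for \<sigma>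
      using inner[OF that k] by (simp add: \<psi>'_def)
    have B: "norm (\<psi>' x - \<psi>' s0) \<le> \<bar>k\<bar> * (6 * e)" if "x \<in> closed_segment s0 (s0 + h)" for x
    proof -
      have "\<bar>x - s0\<bar> < \<delta>" using seg_bound[OF that] h by simp
      then have "norm (\<psi>' x - k *\<^sub>R G s0 t0) \<le> \<bar>k\<bar> * (3 * e)" by (rule inner')
      moreover have "norm (k *\<^sub>R G s0 t0 - \<psi>' s0) \<le> \<bar>k\<bar> * (3 * e)"
        using inner'[of s0] d0 by (simp add: norm_minus_commute)
      ultimately have "norm (\<psi>' x - \<psi>' s0) \<le> \<bar>k\<bar> * (3 * e) + \<bar>k\<bar> * (3 * e)"
        by (rule norm_diff_triangle_le)
      then show ?thesis by (simp add: algebra_simps)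
    qed
    have "norm (\<psi> (s0 + h) - \<psi> s0 - ((s0 + h) - s0) *\<^sub>R \<psi>' s0) \<le> norm ((s0 + h) - s0) * (\<bar>k\<bar> * (6 * e))"
      apply (rule vector_differentiable_bound_linearization[of "closed_segment s0 (s0 + h)"
            "\<psi>" "\<psi>'" s0 "s0 + h" s0 "\<bar>k\<bar> * (6 * e)"])
      using has_vector_derivative_at_within[OF dpsi] B by auto
    then have o1: "norm (\<psi> (s0 + h) - \<psi> s0 - h *\<^sub>R \<psi>' s0) \<le> \<bar>h\<bar> * (\<bar>k\<bar> * (6 * e))" by simp
    have "h *\<^sub>R \<psi>' s0 - (h * k) *\<^sub>R G s0 t0 = h *\<^sub>R (\<psi>' s0 - k *\<^sub>R G s0 t0)"
      by (simp add: scaleR_diff_right)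
    then have "norm (h *\<^sub>R \<psi>' s0 - (h * k) *\<^sub>R G s0 t0) = \<bar>h\<bar> * norm (\<psi>' s0 - k *\<^sub>R G s0 t0)"
      by simp
    also have "\<dots> \<le> \<bar>h\<bar> * (\<bar>k\<bar> * (3 * e))" using inner'[of s0] d0 by (simp add: mult_left_mono)
    finally have o2: "norm (h *\<^sub>R \<psi>' s0 - (h * k) *\<^sub>R G s0 t0) \<le> \<bar>h\<bar> * (\<bar>k\<bar> * (3 * e))" .
    have "norm ((\<psi> (s0 + h) - \<psi> s0) - (h * k) *\<^sub>R G s0 t0) \<le> \<bar>h\<bar> * (\<bar>k\<bar> * (6 * e)) + \<bar>h\<bar> * (\<bar>k\<bar> * (3 * e))"
      by (rule norm_diff_triangle_le[OF o1 o2])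
    also have "\<dots> = \<epsilon> * \<bar>h\<bar> * \<bar>k\<bar>" by (simp add: e_def algebra_simps)
    finally show ?thesis by (simp add: \<psi>_def algebra_simps)
  qed
  show ?thesis
    using main d0 unfolding Q_def G_def s0_def t0_def by (intro exI[of _ \<delta>]) auto
qed

lemma clairaut:
  fixes f :: "('c \<Rightarrow> real) \<Rightarrow> 'a::real_normed_vector"
  assumes sm: "smooth_fs UNIV f"
  shows "pdv c (pdv d f) p = pdv d (pdv c f) p"
proof (cases "c = d")
  case True then show ?thesis by simp
next
  case cd: False
  let ?X = "pdv d (pdv c f) p" and ?Y = "pdv c (pdv d f) p"
  show ?thesis
  proof (rule ccontr)
    assume ne: "?Y \<noteq> ?X"
    define \<epsilon> where "\<epsilon> = norm (?X - ?Y) / 4"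
    have eps: "\<epsilon> > 0" using ne by (simp add: \<epsilon>_def)
    obtain \<delta>1 where d1: "\<delta>1 > 0" and H1: "\<forall>h k. \<bar>h\<bar> < \<delta>1 \<longrightarrow> \<bar>k\<bar> < \<delta>1 \<longrightarrow>
     norm (f ((p(d := p d + k))(c := p c + h)) - f ((p(d := p d))(c := p c + h))
         - f ((p(d := p d + k))(c := p c)) + f ((p(d := p d))(c := p c))
         - (h * k) *\<^sub>R ?X) \<le> \<epsilon> * \<bar>h\<bar> * \<bar>k\<bar>"
      using clairaut_half[OF sm cd eps, of p] by blast
    obtain \<delta>2 where d2: "\<delta>2 > 0" and H2: "\<forall>h k. \<bar>h\<bar> < \<delta>2 \<longrightarrow> \<bar>k\<bar> < \<delta>2 \<longrightarrow>
     norm (f ((p(c := p c + k))(d := p d + h)) - f ((p(c := p c))(d := p d + h))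
         - f ((p(c := p c + k))(d := p d)) + f ((p(c := p c))(d := p d))
         - (h * k) *\<^sub>R ?Y) \<le> \<epsilon> * \<bar>h\<bar> * \<bar>k\<bar>"
      using clairaut_half[OF sm _ eps, of d c p] cd by metis
    define h where "h = min \<delta>1 \<delta>2 / 2"
    have h0: "h > 0" "h < \<delta>1" "h < \<delta>2" using d1 d2 by (auto simp: h_def)
    define \<Delta> where "\<Delta> = f ((p(d := p d + h))(c := p c + h)) - f ((p(d := p d))(c := p c + h))
         - f ((p(d := p d + h))(c := p c)) + f ((p(d := p d))(c := p c))"
    have tw: "(p(c := a))(d := b) = (p(d := b))(c := a)" for a b using cd by (simp add: fun_upd_twist)
    have tw2: "(p(d := b))(c := p c) = p(d := b)" for b using cd by (auto simp: fun_eq_iff)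
    have a1: "norm (\<Delta> - (h * h) *\<^sub>R ?X) \<le> \<epsilon> * h * h"
      using H1[rule_format, of h h] h0 by (simp add: \<Delta>_def tw2)
    have a2: "norm (\<Delta> - (h * h) *\<^sub>R ?Y) \<le> \<epsilon> * h * h"
      using H2[rule_format, of h h] h0 by (simp add: \<Delta>_def tw tw2 algebra_simps)
    have "norm ((h * h) *\<^sub>R ?X - (h * h) *\<^sub>R ?Y) \<le> \<epsilon> * h * h + \<epsilon> * h * h"
      using norm_diff_triangle_le[of "(h * h) *\<^sub>R ?X" \<Delta> "\<epsilon> * h * h" "(h * h) *\<^sub>R ?Y" "\<epsilon> * h * h"] a1 a2
      by (simp add: norm_minus_commute)
    moreover have "norm ((h * h) *\<^sub>R ?X - (h * h) *\<^sub>R ?Y) = (h * h) * norm (?X - ?Y)"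
      by (simp add: scaleR_diff_right[symmetric])
    ultimately have "(h * h) * norm (?X - ?Y) \<le> (h * h) * (2 * \<epsilon>)" by (simp add: algebra_simps)
    then have "norm (?X - ?Y) \<le> 2 * \<epsilon>" using h0 by (simp add: mult_le_cancel_left_pos)
    then show False using eps by (simp add: \<epsilon>_def)
  qed
qed

definition vf :: "('c \<Rightarrow> ('c \<Rightarrow> real) \<Rightarrow> real) \<Rightarrow> 'c set \<Rightarrow> (('c \<Rightarrow> real) \<Rightarrow> 'a::real_normed_vector) \<Rightarrow> ('c \<Rightarrow> real) \<Rightarrow> 'a" where
  "vf a S f p = (\<Sum>c\<in>S. a c p *\<^sub>R pdv c f p)"

lemma vf_mono:
  assumes "finite T" "S \<subseteq> T" "dep S f"
  shows "vf a T f p = vf a S f p"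
  unfolding vf_def
  by (rule sum.mono_neutral_right[OF assms(1,2)]) (auto simp: pdv_outside[OF assms(3)])

lemma vf_bilinear:
  assumes B: "bounded_bilinear B" and f: "D1 f" and g: "D1 g"
  shows "vf a S (\<lambda>p. B (f p) (g p)) p = B (vf a S f p) (g p) + B (f p) (vf a S g p)"
  unfolding vf_def pdv_bilinear[OF B f g]
  by (simp add: bounded_bilinear.sum_left[OF B] bounded_bilinear.sum_right[OF B]
      bounded_bilinear.scaleR_left[OF B] bounded_bilinear.scaleR_right[OF B] scaleR_right_distrib sum.distrib)

lemma vf_add:
  assumes f: "D1 f" and g: "D1 g"
  shows "vf a S (\<lambda>p. f p + g p) p = vf a S f p + vf a S g p"
  unfolding vf_def pdv_add[OF f g] by (simp add: scaleR_right_distrib sum.distrib)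

lemma vf_diff:
  assumes f: "D1 f" and g: "D1 g"
  shows "vf a S (\<lambda>p. f p - g p) p = vf a S f p - vf a S g p"
  unfolding vf_def pdv_diff[OF f g] by (simp add: scaleR_diff_right sum_subtractf)

lemma vf_const: "vf a S (\<lambda>p. k) p = 0"
  unfolding vf_def by (simp add: pdv_const)

lemma vf_coord:
  assumes "finite S"
  shows "vf a S (\<lambda>p. p e) p = (if e \<in> S then a e p else 0)"
proof -
  have "(\<lambda>c. a c p *\<^sub>R pdv c (\<lambda>p. p e) p) = (\<lambda>c. if c = e then a c p else 0)"
    by (auto simp: pdv_coord)
  then have "vf a S (\<lambda>p. p e) p = (\<Sum>c\<in>S. if c = e then a c p else 0)"
    unfolding vf_def by (metis (no_types, lifting))
  then show ?thesis using assms by simp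
qed

lemma dep_vf:
  assumes "dep S f" "\<forall>c\<in>S. dep T (a c)" "S \<subseteq> T"
  shows "dep T (vf a S f)"
  unfolding dep_def vf_def
proof (intro allI impI sum.cong refl)
  fix p q :: "'a \<Rightarrow> real" and c assume pq: "\<forall>c\<in>T. p c = q c" and c: "c \<in> S"
  have "a c p = a c q" using assms(2) c pq unfolding dep_def by blast
  moreover have "pdv c f p = pdv c f q"
    using dep_mono[OF dep_pdv[OF assms(1)] assms(3)] pq unfolding dep_def by blast
  ultimately show "a c p *\<^sub>R pdv c f p = a c q *\<^sub>R pdv c f q" by simp
qed

lemma D1_vf:
  assumes "finite S" "\<forall>c\<in>S. D1 (a c) \<and> D1 (pdv c f)"
  shows "D1 (vf a S f)"
proof -
  have "vf a S f = (\<lambda>p. \<Sum>c\<in>S. a c p *\<^sub>R pdv c f p)" by (rule ext) (simp add: vf_def)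
  then show ?thesis using assms by (simp add: D1_sum D1_bilinear[OF bounded_bilinear_scaleR])
qed

lemma smooth_vf:
  assumes "finite S" "\<forall>c\<in>S. smooth_fs UNIV (a c)" "smooth_fs UNIV f"
  shows "smooth_fs UNIV (vf a S f)"
proof -
  have "vf a S f = (\<lambda>p. \<Sum>c\<in>S. a c p *\<^sub>R pdv c f p)" by (rule ext) (simp add: vf_def)
  then show ?thesis using assms by (simp add: smooth_sum smooth_scaleR smooth_pdv)
qed

lemma vf_vf:
  fixes f :: "('c \<Rightarrow> real) \<Rightarrow> 'a::real_normed_vector"
  assumes sm: "smooth_fs UNIV f" and S: "finite S" "dep S f" and S': "finite S'" "S \<subseteq> S'"
    and b: "\<forall>c\<in>S. D1 (b c)"
  shows "vf a S' (vf b S f) p = (\<Sum>c\<in>S. vf a S' (b c) p *\<^sub>R pdv c f p)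
           + (\<Sum>d\<in>S. \<Sum>c\<in>S. (a d p * b c p) *\<^sub>R pdv d (pdv c f) p)"
proof -
  have e: "vf b S f = (\<lambda>q. \<Sum>c\<in>S. b c q *\<^sub>R pdv c f q)" by (rule ext) (simp add: vf_def)
  have pd: "pdv d (vf b S f) q = (\<Sum>c\<in>S. pdv d (b c) q *\<^sub>R pdv c f q + b c q *\<^sub>R pdv d (pdv c f) q)" for d q
  proof -
    have "pdv d (vf b S f) q = (\<Sum>c\<in>S. pdv d (\<lambda>q. b c q *\<^sub>R pdv c f q) q)"
      unfolding e using S b smooth_D1[OF smooth_pdv[OF sm]]
      by (intro pdv_sum) (auto intro!: D1_bilinear[OF bounded_bilinear_scaleR])
    also have "\<dots> = (\<Sum>c\<in>S. pdv d (b c) q *\<^sub>R pdv c f q + b c q *\<^sub>R pdv d (pdv c f) q)"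
      using b smooth_D1[OF smooth_pdv[OF sm]]
      by (intro sum.cong refl) (simp add: pdv_bilinear[OF bounded_bilinear_scaleR] add.commute)
    finally show ?thesis .
  qed
  have "vf a S' (vf b S f) p = (\<Sum>d\<in>S'. \<Sum>c\<in>S. (a d p * pdv d (b c) p) *\<^sub>R pdv c f p + (a d p * b c p) *\<^sub>R pdv d (pdv c f) p)"
    unfolding vf_def pd by (simp add: scaleR_sum_right scaleR_right_distrib)
  also have "\<dots> = (\<Sum>d\<in>S'. \<Sum>c\<in>S. (a d p * pdv d (b c) p) *\<^sub>R pdv c f p) + (\<Sum>d\<in>S'. \<Sum>c\<in>S. (a d p * b c p) *\<^sub>R pdv d (pdv c f) p)"
    by (simp add: sum.distrib)
  also have "(\<Sum>d\<in>S'. \<Sum>c\<in>S. (a d p * pdv d (b c) p) *\<^sub>R pdv c f p) = (\<Sum>c\<in>S. vf a S' (b c) p *\<^sub>R pdv c f p)"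
    by (subst sum.swap) (simp add: vf_def scaleR_sum_left)
  also have "(\<Sum>d\<in>S'. \<Sum>c\<in>S. (a d p * b c p) *\<^sub>R pdv d (pdv c f) p) = (\<Sum>d\<in>S' \<inter> S. \<Sum>c\<in>S. (a d p * b c p) *\<^sub>R pdv d (pdv c f) p)"
    using S'(1) by (intro sum.mono_neutral_right) (auto simp: pdv_outside[OF dep_pdv[OF S(2)]])
  also have "S' \<inter> S = S" using S'(2) by blast
  finally
  show ?thesis .
qed

lemma vf_comm:
  fixes f :: "('c \<Rightarrow> real) \<Rightarrow> 'a::real_normed_vector"
  assumes sm: "smooth_fs UNIV f" and S: "finite S" "dep S f" and S': "finite S'" "S \<subseteq> S'"
    and a: "\<forall>c\<in>S. D1 (a c)" and b: "\<forall>c\<in>S. D1 (b c)"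
  shows "vf a S' (vf b S f) p - vf b S' (vf a S f) p = (\<Sum>c\<in>S. (vf a S' (b c) p - vf b S' (a c) p) *\<^sub>R pdv c f p)"
proof -
  have "(\<Sum>d\<in>S. \<Sum>c\<in>S. (b d p * a c p) *\<^sub>R pdv d (pdv c f) p) = (\<Sum>c\<in>S. \<Sum>d\<in>S. (b d p * a c p) *\<^sub>R pdv d (pdv c f) p)"
    by (rule sum.swap)
  also have "\<dots> = (\<Sum>c\<in>S. \<Sum>d\<in>S. (a c p * b d p) *\<^sub>R pdv c (pdv d f) p)"
    by (simp add: clairaut[OF sm] mult.commute)
  finally have sw: "(\<Sum>d\<in>S. \<Sum>c\<in>S. (b d p * a c p) *\<^sub>R pdv d (pdv c f) p) = (\<Sum>d\<in>S. \<Sum>c\<in>S. (a d p * b c p) *\<^sub>R pdv d (pdv c f) p)" .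
  show ?thesis
    unfolding vf_vf[OF sm S S' b] vf_vf[OF sm S S' a] sw
    by (simp add: scaleR_diff_left sum_subtractf)
qed

definition aD :: "'m \<Rightarrow> ('m, 'n) jcoord \<Rightarrow> ('m, 'n) jpt \<Rightarrow> real" where
  "aD \<alpha> c = (case c of Xc \<beta> \<Rightarrow> (\<lambda>p. if \<beta> = \<alpha> then 1 else 0) | Uc i J \<Rightarrow> (\<lambda>p. p (Uc i (add_mset \<alpha> J))))"

definition aX :: "('n \<Rightarrow> ('m::linorder, 'n) jpt \<Rightarrow> real) \<Rightarrow> ('m, 'n) jcoord \<Rightarrow> ('m, 'n) jpt \<Rightarrow> real" where
  "aX R c = (case c of Xc \<beta> \<Rightarrow> (\<lambda>p. 0) | Uc i J \<Rightarrow> totDJ J (R i))"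

definition shc :: "'m \<Rightarrow> ('m, 'n) jcoord \<Rightarrow> ('m, 'n) jcoord" where
  "shc \<alpha> c = (case c of Xc \<beta> \<Rightarrow> Xc \<beta> | Uc i J \<Rightarrow> Uc i (add_mset \<alpha> J))"

definition sh :: "'m \<Rightarrow> ('m, 'n) jcoord set \<Rightarrow> ('m, 'n) jcoord set" where
  "sh \<alpha> S = S \<union> shc \<alpha> ` S"

lemma finite_sh: "finite S \<Longrightarrow> finite (sh \<alpha> S)"
  by (simp add: sh_def)

lemma sub_sh: "S \<subseteq> sh \<alpha> S"
  by (simp add: sh_def)

lemma Uc_sh: "Uc i J \<in> S \<Longrightarrow> Uc i (add_mset \<alpha> J) \<in> sh \<alpha> S"
  unfolding sh_def shc_def by (metis UnCI image_eqI jcoord.simps(6))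

lemma fin_M: "finite S \<Longrightarrow> finite {(i, J). Uc i J \<in> S}"
proof -
  assume S: "finite S"
  have "{(i, J). Uc i J \<in> S} = (\<lambda>(i, J). Uc i J) -` S" by auto
  moreover have "inj (\<lambda>(i, J). Uc i J)" by (auto simp: inj_def)
  ultimately show ?thesis using finite_vimageI[OF S] by simp
qed

lemma fin_A: "finite S \<Longrightarrow> finite {\<beta>. Xc \<beta> \<in> S}"
proof -
  assume S: "finite S"
  have "{\<beta>. Xc \<beta> \<in> S} = Xc -` S" by auto
  moreover have "inj Xc" by (auto simp: inj_def)
  ultimately show ?thesis using finite_vimageI[OF S] by simp
qed

lemma sum_jc:
  assumes S: "finite S"
  shows "(\<Sum>c\<in>S. g c) = (\<Sum>\<beta>\<in>{\<beta>. Xc \<beta> \<in> S}. g (Xc \<beta>)) + (\<Sum>(i, J)\<in>{(i, J). Uc i J \<in> S}. g (Uc i J))"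
proof -
  let ?A = "{\<beta>. Xc \<beta> \<in> S}" and ?M = "{(i, J). Uc i J \<in> S}"
  have iX: "inj Xc" by (auto simp: inj_def)
  have iU: "inj (\<lambda>(i, J). Uc i J)" by (auto simp: inj_def)
  have fA: "finite ?A" using fin_A[OF S] .
  have fM: "finite ?M" using fin_M[OF S] .
  have Seq: "S = Xc ` ?A \<union> (\<lambda>(i, J). Uc i J) ` ?M"
  proof (rule set_eqI)
    fix c show "c \<in> S \<longleftrightarrow> c \<in> Xc ` ?A \<union> (\<lambda>(i, J). Uc i J) ` ?M"
      by (cases c) auto
  qed
  have "(\<Sum>c\<in>S. g c) = (\<Sum>c\<in>Xc ` ?A. g c) + (\<Sum>c\<in>(\<lambda>(i, J). Uc i J) ` ?M. g c)"
    by (subst Seq, rule sum.union_disjoint) (use fA fM in auto)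
  also have "(\<Sum>c\<in>Xc ` ?A. g c) = (\<Sum>\<beta>\<in>?A. g (Xc \<beta>))"
    by (rule sum.reindex_cong[of Xc]) (auto simp: inj_on_def)
  also have "(\<Sum>c\<in>(\<lambda>(i, J). Uc i J) ` ?M. g c) = (\<Sum>(i, J)\<in>?M. g (Uc i J))"
    by (rule sum.reindex_cong[of "\<lambda>(i, J). Uc i J"]) (auto simp: inj_on_def)
  finally show ?thesis .
qed

lemma totD_vf:
  assumes S: "finite S" "dep S f"
  shows "totD \<alpha> f p = vf (aD \<alpha>) S f p"
proof -
  let ?A = "{\<beta>. Xc \<beta> \<in> S}" and ?M = "{(i, J). Uc i J \<in> S}"
  have fM: "finite ?M" using fin_M[OF S(1)] .
  have fA: "finite ?A" using fin_A[OF S(1)] .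
  have "vf (aD \<alpha>) S f p = (\<Sum>\<beta>\<in>?A. (if \<beta> = \<alpha> then 1 else 0) *\<^sub>R pdv (Xc \<beta>) f p)
      + (\<Sum>(i, J)\<in>?M. p (Uc i (add_mset \<alpha> J)) *\<^sub>R pdv (Uc i J) f p)"
    unfolding vf_def by (subst sum_jc[OF S(1)]) (simp add: aD_def)
  also have "(\<Sum>\<beta>\<in>?A. (if \<beta> = \<alpha> then 1 else 0) *\<^sub>R pdv (Xc \<beta>) f p) = (\<Sum>\<beta>\<in>?A. if \<beta> = \<alpha> then pdv (Xc \<beta>) f p else 0)"
    by (rule sum.cong) auto
  also have "\<dots> = pdv (Xc \<alpha>) f p"
    using fA pdv_outside[OF S(2), of "Xc \<alpha>"] by simp
  also have "(\<Sum>(i, J)\<in>?M. p (Uc i (add_mset \<alpha> J)) *\<^sub>R pdv (Uc i J) f p) =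
      (\<Sum>(i, J)\<in>{(i, J). pdv (Uc i J) f p \<noteq> 0}. p (Uc i (add_mset \<alpha> J)) *\<^sub>R pdv (Uc i J) f p)"
    using fM pdv_outside[OF S(2)] by (intro sum.mono_neutral_right) auto
  finally show ?thesis unfolding totD_def by simp
qed

lemma prX_vf:
  assumes S: "finite S" "dep S f"
  shows "prX R f p = vf (aX R) S f p"
proof -
  let ?A = "{\<beta>. Xc \<beta> \<in> S}" and ?M = "{(i, J). Uc i J \<in> S}"
  have fM: "finite ?M" using fin_M[OF S(1)] .
  have "vf (aX R) S f p = (\<Sum>\<beta>\<in>?A. 0 *\<^sub>R pdv (Xc \<beta>) f p)
      + (\<Sum>(i, J)\<in>?M. totDJ J (R i) p *\<^sub>R pdv (Uc i J) f p)"
    unfolding vf_def by (subst sum_jc[OF S(1)]) (simp add: aX_def)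
  also have "(\<Sum>(i, J)\<in>?M. totDJ J (R i) p *\<^sub>R pdv (Uc i J) f p) =
      (\<Sum>(i, J)\<in>{(i, J). pdv (Uc i J) f p \<noteq> 0}. totDJ J (R i) p *\<^sub>R pdv (Uc i J) f p)"
    using fM pdv_outside[OF S(2)] by (intro sum.mono_neutral_right) auto
  finally show ?thesis unfolding prX_def by simp
qed

lemma smooth_aD: "smooth_fs UNIV (aD \<alpha> c)"
  by (cases c) (simp_all add: aD_def smooth_const smooth_coord)

lemma dep_aD: "c \<in> S \<Longrightarrow> dep (sh \<alpha> S) (aD \<alpha> c)"
proof (cases c)
  case (Xc \<beta>) then show ?thesis by (simp add: aD_def dep_def)
next
  case (Uc i J)
  assume "c \<in> S"
  then have m: "Uc i (add_mset \<alpha> J) \<in> sh \<alpha> S" using Uc_sh[of i J S \<alpha>] Uc by simp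
  have "aD \<alpha> c = (\<lambda>p. p (Uc i (add_mset \<alpha> J)))" using Uc by (simp add: aD_def)
  then show ?thesis unfolding dep_def using m by simp
qed

lemma totD_eq:
  assumes S: "finite S" "dep S f"
  shows "totD \<alpha> f = vf (aD \<alpha>) S f"
  using totD_vf[OF S] by (intro ext) simp

lemma smooth_totD:
  assumes "smooth_fs UNIV f"
  shows "smooth_fs UNIV (totD \<alpha> f)"
proof -
  obtain S where S: "finite S" "dep S f" using smooth_dep[OF assms] by blast
  show ?thesis unfolding totD_eq[OF S] using S assms by (intro smooth_vf) (auto simp: smooth_aD)
qed

lemma dep_totD:
  assumes S: "finite S" "dep S f"
  shows "dep (sh \<alpha> S) (totD \<alpha> f)"
proof -
  have "\<forall>c\<in>S. dep (sh \<alpha> S) (aD \<alpha> c)" using dep_aD by (intro ballI)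
  then show ?thesis unfolding totD_eq[OF S] by (rule dep_vf[OF S(2) _ sub_sh])
qed

lemma smooth_foldr_totD: "smooth_fs UNIV f \<Longrightarrow> smooth_fs UNIV (foldr totD xs f)"
  by (induction xs) (auto simp: smooth_totD)

lemma smooth_totDJ: "smooth_fs UNIV f \<Longrightarrow> smooth_fs UNIV (totDJ J f)"
  unfolding totDJ_def by (rule smooth_foldr_totD)

lemma smooth_aX: "(\<forall>i. smooth_fs UNIV (R i)) \<Longrightarrow> smooth_fs UNIV (aX R c)"
  by (cases c) (simp_all add: aX_def smooth_const smooth_totDJ)

lemma prX_eq:
  assumes S: "finite S" "dep S f"
  shows "prX R f = vf (aX R) S f"
  using prX_vf[OF S] by (intro ext) simp

lemma smooth_prX:
  assumes "\<forall>i. smooth_fs UNIV (R i)" "smooth_fs UNIV f"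
  shows "smooth_fs UNIV (prX R f)"
proof -
  obtain S where S: "finite S" "dep S f" using smooth_dep[OF assms(2)] by blast
  show ?thesis unfolding prX_eq[OF S] using S assms by (intro smooth_vf) (auto simp: smooth_aX)
qed

lemma totD_comm:
  assumes sm: "smooth_fs UNIV f"
  shows "totD \<alpha> (totD \<beta> f) p = totD \<beta> (totD \<alpha> f) p"
proof -
  obtain S where S: "finite S" "dep S f" using smooth_dep[OF sm] by blast
  define T where "T = sh \<alpha> (sh \<beta> S) \<union> sh \<beta> (sh \<alpha> S)"
  have fT: "finite T" using S by (simp add: T_def finite_sh)
  have sub1: "sh \<beta> S \<subseteq> T" "sh \<alpha> S \<subseteq> T"
    using sub_sh[of "sh \<beta> S" \<alpha>] sub_sh[of "sh \<alpha> S" \<beta>] by (auto simp: T_def)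
  have sub0: "S \<subseteq> T" using sub_sh[of S \<beta>] sub1(1) by (rule subset_trans)
  have d1: "dep T (totD \<beta> f)" by (rule dep_mono[OF dep_totD[OF S] sub1(1)])
  have d2: "dep T (totD \<alpha> f)" by (rule dep_mono[OF dep_totD[OF S] sub1(2)])
  have "totD \<alpha> (totD \<beta> f) p - totD \<beta> (totD \<alpha> f) p =
        vf (aD \<alpha>) T (vf (aD \<beta>) S f) p - vf (aD \<beta>) T (vf (aD \<alpha>) S f) p"
    using totD_vf[OF fT d1, of \<alpha> p] totD_vf[OF fT d2, of \<beta> p] totD_eq[OF S] by simp
  also have "\<dots> = (\<Sum>c\<in>S. (vf (aD \<alpha>) T (aD \<beta> c) p - vf (aD \<beta>) T (aD \<alpha> c) p) *\<^sub>R pdv c f p)"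
    by (rule vf_comm[OF sm S fT sub0]) (auto intro: smooth_D1 smooth_aD)
  also have "\<dots> = 0"
  proof (rule sum.neutral, rule ballI)
    fix c assume c: "c \<in> S"
    have "vf (aD \<alpha>) T (aD \<beta> c) p = vf (aD \<beta>) T (aD \<alpha> c) p"
    proof (cases c)
      case (Xc \<gamma>) then show ?thesis by (simp add: aD_def vf_const)
    next
      case (Uc i J)
      have m1: "Uc i (add_mset \<beta> J) \<in> T" using Uc_sh[of i J S \<beta>] c Uc sub1(1) by auto
      have m2: "Uc i (add_mset \<alpha> J) \<in> T" using Uc_sh[of i J S \<alpha>] c Uc sub1(2) by auto
      show ?thesis using m1 m2 fT Uc by (simp add: aD_def vf_coord add_mset_commute)
    qed
    then show "(vf (aD \<alpha>) T (aD \<beta> c) p - vf (aD \<beta>) T (aD \<alpha> c) p) *\<^sub>R pdv c f p = 0" by simp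
  qed
  finally show ?thesis by simp
qed

lemma foldr_insort:
  assumes sm: "smooth_fs UNIV f"
  shows "foldr totD (insort \<alpha> xs) f = totD \<alpha> (foldr totD xs f)"
proof (induction xs)
  case Nil then show ?case by simp
next
  case (Cons x xs)
  show ?case
  proof (cases "\<alpha> \<le> x")
    case True then show ?thesis by simp
  next
    case False
    then have "foldr totD (insort \<alpha> (x # xs)) f = totD x (totD \<alpha> (foldr totD xs f))"
      using Cons by simp
    also have "\<dots> = totD \<alpha> (totD x (foldr totD xs f))"
      by (rule ext, rule totD_comm[OF smooth_foldr_totD[OF sm]])
    finally show ?thesis by simp
  qed
qed

lemma totDJ_add:
  assumes sm: "smooth_fs UNIV f"
  shows "totDJ (add_mset \<alpha> J) f = totD \<alpha> (totDJ J f)"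
  unfolding totDJ_def by (simp add: foldr_insort[OF sm])

lemma dep_totDJ_aX: "smooth_fs UNIV (R i) \<Longrightarrow> \<exists>T. finite T \<and> dep T (totDJ J (R i))"
  using smooth_dep[OF smooth_totDJ] by blast

lemma totD_prX:
  assumes R: "\<forall>i. smooth_fs UNIV (R i)" and sm: "smooth_fs UNIV f"
  shows "totD \<alpha> (prX R f) p = prX R (totD \<alpha> f) p"
proof -
  obtain S where S: "finite S" "dep S f" using smooth_dep[OF sm] by blast
  have "\<forall>c. \<exists>T. finite T \<and> dep T (aX R c)"
    using smooth_dep[OF smooth_aX[OF R]] by blast
  then obtain Tc where Tc: "\<And>c. finite (Tc c)" "\<And>c. dep (Tc c) (aX R c)" by metis
  define U where "U = sh \<alpha> S \<union> (\<Union>c\<in>S. Tc c)"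
  have fU: "finite U" using S Tc(1) by (simp add: U_def finite_sh)
  have shU: "sh \<alpha> S \<subseteq> U" by (simp add: U_def)
  have subU: "S \<subseteq> U" using sub_sh[of S \<alpha>] shU by (rule subset_trans)
  have TcU: "c \<in> S \<Longrightarrow> Tc c \<subseteq> U" for c by (auto simp: U_def)
  have daX: "\<forall>c\<in>S. dep U (aX R c)" using dep_mono[OF Tc(2) TcU] by blast
  have d1: "dep U (prX R f)" unfolding prX_eq[OF S] by (rule dep_vf[OF S(2) daX subU])
  have d2: "dep U (totD \<alpha> f)" by (rule dep_mono[OF dep_totD[OF S] shU])
  have "totD \<alpha> (prX R f) p - prX R (totD \<alpha> f) p =
        vf (aD \<alpha>) U (vf (aX R) S f) p - vf (aX R) U (vf (aD \<alpha>) S f) p"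
    using totD_vf[OF fU d1, of \<alpha> p] prX_vf[OF fU d2, of R p] totD_eq[OF S] prX_eq[OF S] by simp
  also have "\<dots> = (\<Sum>c\<in>S. (vf (aD \<alpha>) U (aX R c) p - vf (aX R) U (aD \<alpha> c) p) *\<^sub>R pdv c f p)"
    by (rule vf_comm[OF sm S fU subU]) (auto intro: smooth_D1 smooth_aD smooth_aX[OF R])
  also have "\<dots> = 0"
  proof (rule sum.neutral, rule ballI)
    fix c assume c: "c \<in> S"
    have "vf (aD \<alpha>) U (aX R c) p = vf (aX R) U (aD \<alpha> c) p"
    proof (cases c)
      case (Xc \<gamma>) then show ?thesis by (simp add: aD_def aX_def vf_const)
    next
      case (Uc i J)
      have m: "Uc i (add_mset \<alpha> J) \<in> U" using Uc_sh[of i J S \<alpha>] c Uc shU by auto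
      have "dep U (aX R c)" using daX c by blast
      then have dT: "dep U (totDJ J (R i))" using Uc by (simp add: aX_def)
      have "vf (aD \<alpha>) U (aX R c) p = totD \<alpha> (totDJ J (R i)) p"
        using totD_vf[OF fU dT, of \<alpha> p] Uc by (simp add: aX_def)
      also have "\<dots> = totDJ (add_mset \<alpha> J) (R i) p"
        using totDJ_add[OF R[rule_format, of i], of \<alpha> J] by simp
      also have "\<dots> = vf (aX R) U (aD \<alpha> c) p"
        using m fU Uc by (simp add: aD_def aX_def vf_coord)
      finally show ?thesis .
    qed
    then show "(vf (aD \<alpha>) U (aX R c) p - vf (aX R) U (aD \<alpha> c) p) *\<^sub>R pdv c f p = 0" by simp
  qed
  finally show ?thesis by simp
qed

lemma common_dep:
  assumes "smooth_fs UNIV f" "smooth_fs UNIV g"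
  shows "\<exists>S. finite S \<and> dep S f \<and> dep S g"
proof -
  obtain S1 where S1: "finite S1" "dep S1 f" using smooth_dep[OF assms(1)] by blast
  obtain S2 where S2: "finite S2" "dep S2 g" using smooth_dep[OF assms(2)] by blast
  have "dep (S1 \<union> S2) f" by (rule dep_mono[OF S1(2)]) simp
  moreover have "dep (S1 \<union> S2) g" by (rule dep_mono[OF S2(2)]) simp
  moreover have "finite (S1 \<union> S2)" using S1 S2 by simp
  ultimately show ?thesis by blast
qed

lemma totD_bilinear:
  assumes B: "bounded_bilinear B" and f: "smooth_fs UNIV f" and g: "smooth_fs UNIV g"
  shows "totD \<alpha> (\<lambda>p. B (f p) (g p)) p = B (totD \<alpha> f p) (g p) + B (f p) (totD \<alpha> g p)"
proof -
  obtain S where S: "finite S" "dep S f" "dep S g" using common_dep[OF f g] by blast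
  have d: "dep S (\<lambda>p. B (f p) (g p))" using dep_bin[OF S(2) S(3)] by simp
  show ?thesis
    unfolding totD_vf[OF S(1) d] totD_vf[OF S(1) S(2)] totD_vf[OF S(1) S(3)]
    by (rule vf_bilinear[OF B smooth_D1[OF f] smooth_D1[OF g]])
qed

lemma prX_bilinear:
  assumes B: "bounded_bilinear B" and f: "smooth_fs UNIV f" and g: "smooth_fs UNIV g"
  shows "prX R (\<lambda>p. B (f p) (g p)) p = B (prX R f p) (g p) + B (f p) (prX R g p)"
proof -
  obtain S where S: "finite S" "dep S f" "dep S g" using common_dep[OF f g] by blast
  have d: "dep S (\<lambda>p. B (f p) (g p))" using dep_bin[OF S(2) S(3)] by simp
  show ?thesis
    unfolding prX_vf[OF S(1) d] prX_vf[OF S(1) S(2)] prX_vf[OF S(1) S(3)]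
    by (rule vf_bilinear[OF B smooth_D1[OF f] smooth_D1[OF g]])
qed

lemma prX_add:
  assumes f: "smooth_fs UNIV f" and g: "smooth_fs UNIV g"
  shows "prX R (\<lambda>p. f p + g p) p = prX R f p + prX R g p"
proof -
  obtain S where S: "finite S" "dep S f" "dep S g" using common_dep[OF f g] by blast
  have d: "dep S (\<lambda>p. f p + g p)" using dep_bin[OF S(2) S(3)] by simp
  show ?thesis
    unfolding prX_vf[OF S(1) d] prX_vf[OF S(1) S(2)] prX_vf[OF S(1) S(3)]
    by (rule vf_add[OF smooth_D1[OF f] smooth_D1[OF g]])
qed

lemma vf_inv:
  fixes \<Phi> :: "('c \<Rightarrow> real) \<Rightarrow> complex^'k::finite^'k"
  assumes d: "D1 \<Phi>" and ct: "continuous_on UNIV \<Phi>" and inv: "\<And>p. invertible (\<Phi> p)"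
  shows "vf a S (\<lambda>p. matrix_inv (\<Phi> p)) p = - (matrix_inv (\<Phi> p) ** vf a S \<Phi> p ** matrix_inv (\<Phi> p))"
  unfolding vf_def pdv_inv[OF assms]
  by (simp add: bounded_bilinear.sum_left[OF bb_mmult] bounded_bilinear.sum_right[OF bb_mmult]
       mm_scaleR_left mm_scaleR_right sum_negf)

lemma totD_inv:
  fixes \<Phi> :: "('m::linorder, 'n) jpt \<Rightarrow> complex^'k::finite^'k"
  assumes sm: "smooth_fs UNIV \<Phi>" and inv: "\<And>p. invertible (\<Phi> p)"
  shows "totD \<alpha> (\<lambda>p. matrix_inv (\<Phi> p)) p = - (matrix_inv (\<Phi> p) ** totD \<alpha> \<Phi> p ** matrix_inv (\<Phi> p))"
proof -
  obtain S where S: "finite S" "dep S \<Phi>" using smooth_dep[OF sm] by blast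
  have d: "dep S (\<lambda>p. matrix_inv (\<Phi> p))" by (rule dep_un[OF S(2)])
  show ?thesis
    unfolding totD_vf[OF S(1) d] totD_vf[OF S(1) S(2)]
    by (rule vf_inv[OF smooth_D1[OF sm] smooth_cont[OF sm] inv])
qed

lemma lie_zero: "matrix_lie_group G \<Longrightarrow> 0 \<in> lie_algebra G"
  unfolding lie_algebra_def matrix_lie_group_def
  by (rule CollectI, rule exI[of _ "\<lambda>t. mat 1"], rule exI[of _ 1]) (auto intro: has_vector_derivative_const)

lemma lie_add:
  assumes G: "matrix_lie_group G" and X: "X \<in> lie_algebra G" and Y: "Y \<in> lie_algebra G"
  shows "X + Y \<in> lie_algebra G"
proof -
  obtain \<gamma>1 e1 where g1: "e1 > 0" "\<And>t. \<bar>t\<bar> < e1 \<Longrightarrow> \<gamma>1 t \<in> G" "\<gamma>1 0 = mat 1"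
    "(\<gamma>1 has_vector_derivative X) (at 0)" using X unfolding lie_algebra_def by blast
  obtain \<gamma>2 e2 where g2: "e2 > 0" "\<And>t. \<bar>t\<bar> < e2 \<Longrightarrow> \<gamma>2 t \<in> G" "\<gamma>2 0 = mat 1"
    "(\<gamma>2 has_vector_derivative Y) (at 0)" using Y unfolding lie_algebra_def by blast
  have mul: "\<And>A B. A \<in> G \<Longrightarrow> B \<in> G \<Longrightarrow> A ** B \<in> G" using G unfolding matrix_lie_group_def by blast
  have "((\<lambda>t. \<gamma>1 t ** \<gamma>2 t) has_vector_derivative (\<gamma>1 0 ** Y + X ** \<gamma>2 0)) (at 0)"
    by (rule bounded_bilinear.has_vector_derivative[OF bb_mmult g1(4) g2(4)])
  then have d: "((\<lambda>t. \<gamma>1 t ** \<gamma>2 t) has_vector_derivative (X + Y)) (at 0)"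
    using g1(3) g2(3) by (simp add: add.commute)
  show ?thesis unfolding lie_algebra_def
    apply (rule CollectI, rule exI[of _ "\<lambda>t. \<gamma>1 t ** \<gamma>2 t"], rule exI[of _ "min e1 e2"])
    using g1 g2 d mul by auto
qed

lemma lie_scale:
  assumes G: "matrix_lie_group G" and X: "X \<in> lie_algebra G"
  shows "r *\<^sub>R X \<in> lie_algebra G"
proof -
  obtain \<gamma> e where g: "e > 0" "\<And>t. \<bar>t\<bar> < e \<Longrightarrow> \<gamma> t \<in> G" "\<gamma> 0 = mat 1"
    "(\<gamma> has_vector_derivative X) (at 0)" using X unfolding lie_algebra_def by blast
  define e' where "e' = e / (\<bar>r\<bar> + 1)"
  have e': "e' > 0" using g(1) by (simp add: e'_def)
  have inG: "\<gamma> (r * t) \<in> G" if "\<bar>t\<bar> < e'" for t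
  proof -
    have "\<bar>r * t\<bar> \<le> (\<bar>r\<bar> + 1) * \<bar>t\<bar>" by (simp add: abs_mult mult_right_mono)
    also have "\<dots> < (\<bar>r\<bar> + 1) * e'" using that by (intro mult_strict_left_mono) auto
    also have "\<dots> = e" by (simp add: e'_def)
    finally show ?thesis using g(2) by blast
  qed
  have dr: "((\<lambda>t. r * t) has_vector_derivative r) (at 0)"
    using has_real_derivative_iff_has_vector_derivative[THEN iffD1, OF DERIV_cmult_Id[of r 0]] by simp
  have "((\<gamma> \<circ> (\<lambda>t. r * t)) has_vector_derivative (r *\<^sub>R X)) (at 0)"
    by (rule vector_diff_chain_at[OF dr]) (simp add: g(4))
  then have d: "((\<lambda>t. \<gamma> (r * t)) has_vector_derivative (r *\<^sub>R X)) (at 0)" by (simp add: o_def)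
  show ?thesis unfolding lie_algebra_def
    apply (rule CollectI, rule exI[of _ "\<lambda>t. \<gamma> (r * t)"], rule exI[of _ e'])
    using e' inG g(3) d by auto
qed

lemma lie_sum:
  assumes G: "matrix_lie_group G" and f: "\<And>i. i \<in> I \<Longrightarrow> f i \<in> lie_algebra G"
  shows "sum f I \<in> lie_algebra G"
proof (cases "finite I")
  case False then show ?thesis using lie_zero[OF G] by simp
next
  case True
  then show ?thesis using f
  proof (induction I rule: finite_induct)
    case empty then show ?case using lie_zero[OF G] by simp
  next
    case (insert x F) then show ?case using lie_add[OF G] by simp
  qed
qed

lemma lie_gen:
  fixes \<Phi> :: "('c \<Rightarrow> real) \<Rightarrow> complex^'k::finite^'k"
  assumes G: "matrix_lie_group G" and inG: "\<And>q. \<Phi> q \<in> G" and d: "D1 \<Phi>"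
  shows "matrix_inv (\<Phi> q) ** pdv c \<Phi> q \<in> lie_algebra G"
proof -
  have mul: "\<And>A B. A \<in> G \<Longrightarrow> B \<in> G \<Longrightarrow> A ** B \<in> G" using G unfolding matrix_lie_group_def by blast
  have iG: "matrix_inv (\<Phi> q) \<in> G" using G inG unfolding matrix_lie_group_def by blast
  have inv: "invertible (\<Phi> q)" using G inG unfolding matrix_lie_group_def by blast
  have dr: "((\<lambda>t. q c + t) has_vector_derivative 1) (at 0)"
    by (auto intro!: derivative_eq_intros)
  have "((\<lambda>s. \<Phi> (q(c := s))) has_vector_derivative pdv c \<Phi> q) (at ((\<lambda>t. q c + t) 0))"
    using D1_at'[OF d, of q c] by simp
  from vector_diff_chain_at[OF dr this]
  have d1: "((\<lambda>t. \<Phi> (q(c := q c + t))) has_vector_derivative pdv c \<Phi> q) (at 0)" by (simp add: o_def)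
  have "((\<lambda>t. matrix_inv (\<Phi> q) ** \<Phi> (q(c := q c + t))) has_vector_derivative
          (matrix_inv (\<Phi> q) ** pdv c \<Phi> q + 0 ** \<Phi> (q(c := q c + 0)))) (at 0)"
    by (rule bounded_bilinear.has_vector_derivative[OF bb_mmult has_vector_derivative_const d1])
  then have d2: "((\<lambda>t. matrix_inv (\<Phi> q) ** \<Phi> (q(c := q c + t))) has_vector_derivative
          (matrix_inv (\<Phi> q) ** pdv c \<Phi> q)) (at 0)" by simp
  have g0: "matrix_inv (\<Phi> q) ** \<Phi> (q(c := q c + 0)) = mat 1" using invertible_inv[OF inv] by simp
  show ?thesis unfolding lie_algebra_def
    apply (rule CollectI, rule exI[of _ "\<lambda>t. matrix_inv (\<Phi> q) ** \<Phi> (q(c := q c + t))"], rule exI[of _ 1])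
    using d2 g0 iG inG mul by auto
qed

lemma final_alg:
  fixes a Ph u x P PU :: "complex^'k::finite^'k"
  assumes i1: "a ** Ph = mat 1" and i2: "Ph ** a = mat 1"
  shows "(- (a ** (u ** Ph) ** a)) ** x + a ** (P + (PU ** Ph + u ** x)) = a ** (PU + P ** a) ** Ph"
proof -
  have r1: "Y ** Ph ** a = Y" for Y :: "complex^'k^'k"
    by (simp add: matrix_mul_assoc[symmetric] i2)
  have r2: "Y ** a ** Ph = Y" for Y :: "complex^'k^'k"
    by (simp add: matrix_mul_assoc[symmetric] i1)
  show ?thesis
    by (simp add: matrix_add_ldistrib matrix_add_rdistrib mm_minus_left mm_minus_right matrix_mul_assoc r1 r2)
qed

theorem theorem8:
  fixes \<Delta> :: "'mu::finite \<Rightarrow> ('m::{finite,linorder}, 'n::finite) jpt \<Rightarrow> real"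
    and p :: nat
    and \<Theta> :: "'nu::finite \<Rightarrow> ('m, 'n) jpt \<Rightarrow> real"
    and G :: "(complex^'k::finite^'k) set"
    and \<Lambda> :: "complex set"
    and U :: "'m \<Rightarrow> complex \<Rightarrow> ('m, 'n) jpt \<Rightarrow> complex^'k^'k"
    and \<Phi> :: "complex \<Rightarrow> ('m, 'n) jpt \<Rightarrow> complex^'k^'k"
    and R :: "'n \<Rightarrow> ('m, 'n) jpt \<Rightarrow> real"
  assumes G: "matrix_lie_group G"
    and \<Delta>_smooth: "\<forall>\<mu>. smooth_fs UNIV (\<Delta> \<mu>)"
    and \<Delta>_order: "\<forall>\<mu>. jet_order_le p (\<Delta> \<mu>)"
    and \<Delta>_rank: "maximal_rank \<Delta>"
    and \<Delta>_solv: "locally_solvable p \<Delta>"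
    and \<Theta>_smooth: "\<forall>\<nu>. smooth_fs UNIV (\<Theta> \<nu>)"
    and U_form: "\<forall>lam\<in>\<Lambda>. \<forall>\<alpha>. smooth_fs UNIV (U \<alpha> lam) \<and> (\<forall>q. U \<alpha> lam q \<in> lie_algebra G)"
    and \<Phi>_G: "\<forall>lam\<in>\<Lambda>. smooth_fs UNIV (\<Phi> lam) \<and> (\<forall>q. \<Phi> lam q \<in> G)"
    and \<Phi>_lsp: "\<forall>lam\<in>\<Lambda>. \<forall>q \<in> prolong \<Delta> \<inter> prolong \<Theta>. \<forall>\<alpha>.
                  totD \<alpha> (\<Phi> lam) q = U \<alpha> lam q ** \<Phi> lam q"
    and R_smooth: "\<forall>i. smooth_fs UNIV (R i)"
    and R_sym: "gen_symmetry \<Delta> R"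
  shows "\<forall>lam\<in>\<Lambda>.
     smooth_fs UNIV (\<lambda>q. matrix_inv (\<Phi> lam q) ** prX R (\<Phi> lam) q) \<and>
     (\<forall>q \<in> prolong \<Delta> \<inter> prolong \<Theta>.
        matrix_inv (\<Phi> lam q) ** prX R (\<Phi> lam) q \<in> lie_algebra G \<and>
        (\<forall>\<alpha>. totD \<alpha> (\<lambda>q'. matrix_inv (\<Phi> lam q') ** prX R (\<Phi> lam) q') q =
              matrix_inv (\<Phi> lam q) **
                (prX R (U \<alpha> lam) q +
                 prX R (\<lambda>q'. totD \<alpha> (\<Phi> lam) q' - U \<alpha> lam q' ** \<Phi> lam q') q ** matrix_inv (\<Phi> lam q))
              ** \<Phi> lam q))"
proof (rule ballI)
  fix lam assume lam: "lam \<in> \<Lambda>"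
  have smP: "smooth_fs UNIV (\<Phi> lam)" using \<Phi>_G lam by blast
  have inG: "\<And>q. \<Phi> lam q \<in> G" using \<Phi>_G lam by blast
  have inv: "\<And>q. invertible (\<Phi> lam q)" using inG G unfolding matrix_lie_group_def by blast
  have smU: "\<And>\<alpha>. smooth_fs UNIV (U \<alpha> lam)" using U_form lam by blast
  have sA: "smooth_fs UNIV (\<lambda>q. matrix_inv (\<Phi> lam q))" by (rule smooth_inv[OF smP inv])
  have sX: "smooth_fs UNIV (prX R (\<Phi> lam))" by (rule smooth_prX[OF R_smooth smP])
  show "smooth_fs UNIV (\<lambda>q. matrix_inv (\<Phi> lam q) ** prX R (\<Phi> lam) q) \<and>
     (\<forall>q \<in> prolong \<Delta> \<inter> prolong \<Theta>.
        matrix_inv (\<Phi> lam q) ** prX R (\<Phi> lam) q \<in> lie_algebra G \<and>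
        (\<forall>\<alpha>. totD \<alpha> (\<lambda>q'. matrix_inv (\<Phi> lam q') ** prX R (\<Phi> lam) q') q =
              matrix_inv (\<Phi> lam q) **
                (prX R (U \<alpha> lam) q +
                 prX R (\<lambda>q'. totD \<alpha> (\<Phi> lam) q' - U \<alpha> lam q' ** \<Phi> lam q') q ** matrix_inv (\<Phi> lam q))
              ** \<Phi> lam q))"
  proof (intro conjI ballI)
  show "smooth_fs UNIV (\<lambda>q. matrix_inv (\<Phi> lam q) ** prX R (\<Phi> lam) q)"
    by (rule smooth_mmult[OF sA sX])
  next
    fix q assume q: "q \<in> prolong \<Delta> \<inter> prolong \<Theta>"
    let ?A = "matrix_inv (\<Phi> lam q)"
    let ?N = "{(i, J). pdv (Uc i J) (\<Phi> lam) q \<noteq> 0}"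
    have "?A ** prX R (\<Phi> lam) q =
          (\<Sum>x\<in>?N. ?A ** (case x of (i, J) \<Rightarrow> totDJ J (R i) q *\<^sub>R pdv (Uc i J) (\<Phi> lam) q))"
      unfolding prX_def by (rule bounded_bilinear.sum_right[OF bb_mmult])
    also have "\<dots> \<in> lie_algebra G"
    proof (rule lie_sum[OF G])
      fix x assume "x \<in> ?N"
      obtain i J where x: "x = (i, J)" by fastforce
      have "?A ** pdv (Uc i J) (\<Phi> lam) q \<in> lie_algebra G"
        by (rule lie_gen[OF G inG smooth_D1[OF smP]])
      then have "totDJ J (R i) q *\<^sub>R (?A ** pdv (Uc i J) (\<Phi> lam) q) \<in> lie_algebra G"
        by (rule lie_scale[OF G])
      then show "?A ** (case x of (i, J) \<Rightarrow> totDJ J (R i) q *\<^sub>R pdv (Uc i J) (\<Phi> lam) q) \<in> lie_algebra G"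
        by (simp add: x mm_scaleR_right)
    qed
    finally show "?A ** prX R (\<Phi> lam) q \<in> lie_algebra G" .
  next
    fix q assume q: "q \<in> prolong \<Delta> \<inter> prolong \<Theta>"
    show "\<forall>\<alpha>. totD \<alpha> (\<lambda>q'. matrix_inv (\<Phi> lam q') ** prX R (\<Phi> lam) q') q =
              matrix_inv (\<Phi> lam q) **
                (prX R (U \<alpha> lam) q +
                 prX R (\<lambda>q'. totD \<alpha> (\<Phi> lam) q' - U \<alpha> lam q' ** \<Phi> lam q') q ** matrix_inv (\<Phi> lam q))
              ** \<Phi> lam q"
    proof
    fix \<alpha>
    have sD: "smooth_fs UNIV (totD \<alpha> (\<Phi> lam))" by (rule smooth_totD[OF smP])
    have sUP: "smooth_fs UNIV (\<lambda>q'. U \<alpha> lam q' ** \<Phi> lam q')" by (rule smooth_mmult[OF smU smP])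
    have sDiff: "smooth_fs UNIV (\<lambda>q'. totD \<alpha> (\<Phi> lam) q' - U \<alpha> lam q' ** \<Phi> lam q')"
      by (rule smooth_diff[OF sD sUP])
    have e1: "totD \<alpha> (\<lambda>q'. matrix_inv (\<Phi> lam q') ** prX R (\<Phi> lam) q') q =
        totD \<alpha> (\<lambda>q'. matrix_inv (\<Phi> lam q')) q ** prX R (\<Phi> lam) q + matrix_inv (\<Phi> lam q) ** totD \<alpha> (prX R (\<Phi> lam)) q"
      by (rule totD_bilinear[OF bb_mmult sA sX])
    have e2: "totD \<alpha> (\<lambda>q'. matrix_inv (\<Phi> lam q')) q = - (matrix_inv (\<Phi> lam q) ** totD \<alpha> (\<Phi> lam) q ** matrix_inv (\<Phi> lam q))"
      by (rule totD_inv[OF smP inv])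
    have e3: "totD \<alpha> (prX R (\<Phi> lam)) q = prX R (totD \<alpha> (\<Phi> lam)) q"
      by (rule totD_prX[OF R_smooth smP])
    have "totD \<alpha> (\<Phi> lam) = (\<lambda>q'. (totD \<alpha> (\<Phi> lam) q' - U \<alpha> lam q' ** \<Phi> lam q') + U \<alpha> lam q' ** \<Phi> lam q')"
      by (rule ext) simp
    then have e4: "prX R (totD \<alpha> (\<Phi> lam)) q =
        prX R (\<lambda>q'. totD \<alpha> (\<Phi> lam) q' - U \<alpha> lam q' ** \<Phi> lam q') q + prX R (\<lambda>q'. U \<alpha> lam q' ** \<Phi> lam q') q"
      using prX_add[OF sDiff sUP, of R q] by simp
    have e5: "prX R (\<lambda>q'. U \<alpha> lam q' ** \<Phi> lam q') q = prX R (U \<alpha> lam) q ** \<Phi> lam q + U \<alpha> lam q ** prX R (\<Phi> lam) q"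
      by (rule prX_bilinear[OF bb_mmult smU smP])
    have e6: "totD \<alpha> (\<Phi> lam) q = U \<alpha> lam q ** \<Phi> lam q" using \<Phi>_lsp lam q by blast
    show "totD \<alpha> (\<lambda>q'. matrix_inv (\<Phi> lam q') ** prX R (\<Phi> lam) q') q =
              matrix_inv (\<Phi> lam q) **
                (prX R (U \<alpha> lam) q +
                 prX R (\<lambda>q'. totD \<alpha> (\<Phi> lam) q' - U \<alpha> lam q' ** \<Phi> lam q') q ** matrix_inv (\<Phi> lam q))
              ** \<Phi> lam q"
      unfolding e1 e2 e3 e4 e5 e6
      by (rule final_alg[OF invertible_inv(2)[OF inv] invertible_inv(1)[OF inv]])
    qed
  qed
qed

end
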